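(* Let $n \ge 4$ and $1 \le a \le b \le n$ be integers, and consider the problem $\mathrm{IK}^n(x_a\cdots x_b)$ of minimizing $x_a x_{a+1}\cdots x_b$ over $\mathcal{X}^n$. Let $l \in \{1,\ldots,n\}$. Then: (a) if $a = b$, then $\bar x(b)$ is a minimizer of $x_b$ over $\mathcal{X}^n$; (b) if $b < n-1$ and $\bar x(l)$ is a minimizer of $x_a\cdots x_b$, then $a \le l \le 2 + \log_2(\log_2 n + \log_2 e)$ or $l = b$; (c) if $a=1$ and $b=n$, then $\bar x(n) = \big(\frac1{s_1},\ldots,\frac1{s_{n-1}},\frac1{s_n-1}\big)$ is the unique minimizer of $x_1\cdots x_n$ over $\mathcal{X}^n$; (d) if $b = n$, then $\bar x(l)$ is a minimizer of $x_a\cdots x_n$ if and only if $l = n$; (e) if $b = n-1$, then $\bar x(l)$ is a minimizer of $x_a\cdots x_{n-1}$ if and only if either $l = n-1$, or $n = 4$, $a\in\{1,2\}$ and $l = 2$.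
   Context: The Sylvester sequence: $s_1 = 2$, $s_i = \prod_{j=1}^{i-1} s_j + 1$ for $i\ge2$. $\mathcal{X}^n$ is the set of $x\in\mathbb{R}^n$ with $x_1+\cdots+x_n = 1$, $1 \ge x_1 \ge \cdots \ge x_n \ge 0$, and $x_1\cdots x_j \le x_{j+1}+\cdots+x_n$ for all $j\in\{1,\ldots,n-1\}$. For $l\in\{1,\ldots,n\}$, $\bar x(l) := \big(\frac{1}{s_1},\ldots,\frac{1}{s_{l-1}}, \frac{1}{(n-l+1)(s_l-1)},\ldots,\frac{1}{(n-l+1)(s_l-1)}\big)\in\mathbb{R}^n$ (last value repeated $n-l+1$ times); these lie in $\mathcal{X}^n$. *)

theory Defs
  imports Complex_Main
begin

text \<open>Sylvester sequence: s 1 = 2, s i = (prod_{j=1}^{i-1} s j) + 1 for i >= 2.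
  The value at index 0 is an unused dummy (0).\<close>
fun sylv :: "nat \<Rightarrow> nat" where
  "sylv 0 = 0"
| "sylv (Suc i) = (if i = 0 then 2 else (\<Prod>j\<in>{1..i}. sylv j) + 1)"

text \<open>Points of R^n are represented as functions nat => real, with coordinates
  x 1, ..., x n and required to vanish outside {1..n}.\<close>
definition Xset :: "nat \<Rightarrow> (nat \<Rightarrow> real) set" where
  "Xset n = {x. (\<forall>i. i \<notin> {1..n} \<longrightarrow> x i = 0)
             \<and> (\<Sum>i=1..n. x i) = 1
             \<and> x 1 \<le> 1
             \<and> (\<forall>i. 1 \<le> i \<and> i < n \<longrightarrow> x (i+1) \<le> x i)
             \<and> x n \<ge> 0
             \<and> (\<forall>j. 1 \<le> j \<and> j \<le> n - 1 \<longrightarrow> (\<Prod>i=1..j. x i) \<le> (\<Sum>i=j+1..n. x i))}"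

definition xbar :: "nat \<Rightarrow> nat \<Rightarrow> (nat \<Rightarrow> real)" where
  "xbar n l = (\<lambda>i. if 1 \<le> i \<and> i < l then 1 / real (sylv i)
                   else if l \<le> i \<and> i \<le> n then 1 / (real (n - l + 1) * (real (sylv l) - 1))
                   else 0)"

definition obj :: "nat \<Rightarrow> nat \<Rightarrow> (nat \<Rightarrow> real) \<Rightarrow> real" where
  "obj a b x = (\<Prod>i=a..b. x i)"

definition is_minimizer :: "nat \<Rightarrow> nat \<Rightarrow> nat \<Rightarrow> (nat \<Rightarrow> real) \<Rightarrow> bool" where
  "is_minimizer n a b x \<longleftrightarrow> x \<in> Xset n \<and> (\<forall>y\<in>Xset n. obj a b x \<le> obj a b y)"

end

theory Submission
  imports Defs
begin


definition Q :: "nat \<Rightarrow> nat" where "Q j = (\<Prod>i\<in>{1..j}. sylv i)"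
definition A :: "nat \<Rightarrow> real" where "A j = 1 / real (Q j)"

lemma Q_0[simp]: "Q 0 = 1" by (simp add: Q_def)

lemma sylv_Suc_Q: "sylv (Suc j) = Q j + 1"
proof (cases j)
  case 0 then show ?thesis by simp
next
  case (Suc k) then show ?thesis by (simp only: sylv.simps Q_def) simp
qed

declare sylv.simps(2)[simp del]

lemma Q_Suc: "Q (Suc j) = Q j * sylv (Suc j)"
  unfolding Q_def by (simp add: prod.nat_ivl_Suc')

lemma Q_Suc': "Q (Suc j) = Q j * (Q j + 1)"
  by (simp add: Q_Suc sylv_Suc_Q)

lemma Q_pos: "Q j \<ge> 1"
  by (induction j) (auto simp: Q_Suc')

lemma sylv_ge2: "i \<ge> 1 \<Longrightarrow> sylv i \<ge> 2"
  using Q_pos by (cases i) (auto simp: sylv_Suc_Q)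



lemma Q_ge2: "j \<ge> 1 \<Longrightarrow> Q j \<ge> 2"
proof (cases j)
  case (Suc k)
  have "Q k \<ge> 1" by (rule Q_pos)
  then have "Q k * (Q k + 1) \<ge> 1 * 2" by (intro mult_mono) auto
  then show ?thesis using Suc by (simp add: Q_Suc')
qed auto

lemma A_0[simp]: "A 0 = 1" by (simp add: A_def)
lemma A_pos: "0 < A j" using Q_pos[of j] by (simp add: A_def)
lemma A_le1: "A j \<le> 1" using Q_pos[of j] by (simp add: A_def)
lemma A_le_half: "j \<ge> 1 \<Longrightarrow> A j \<le> 1/2" using Q_ge2[of j] by (simp add: A_def field_simps)

lemma A_Suc: "A (Suc j) = A j ^ 2 / (1 + A j)"
proof -
  have q: "real (Q j) \<ge> 1" using Q_pos[of j] by simp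
  show ?thesis unfolding A_def Q_Suc' using q
    by (simp add: field_simps power2_eq_square)
qed

lemma g_eq: "1 / real (sylv (Suc j)) = A j - A (Suc j)"
proof -
  have q: "real (Q j) \<ge> 1" using Q_pos[of j] by simp
  have q2: "real (Q j) * (real (Q j) + 1) > 0" using q by (simp add: add_pos_pos)
  show ?thesis unfolding A_def Q_Suc' sylv_Suc_Q using q q2
    by (simp add: field_simps)
qed

lemma A_Suc_le: "A (Suc j) \<le> A j"
proof -
  have "A j ^ 2 \<le> A j * (1 + A j)" using A_pos[of j] by (simp add: power2_eq_square field_simps)
  then show ?thesis using A_pos[of j] by (simp add: A_Suc divide_le_eq add_pos_pos)
qed
lemma A_mono: "i \<le> j \<Longrightarrow> A j \<le> A i"
  by (induction j rule: dec_induct) (auto intro: order_trans[OF A_Suc_le])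
lemma A_Suc_le_sq: "A (Suc j) \<le> A j ^ 2"
  using A_pos[of j] by (simp add: A_Suc divide_le_eq)

lemma Q_1: "Q 1 = 2" using Q_Suc'[of 0] by simp
lemma Q_2: "Q 2 = 6"
proof -
  have "Q 2 = Q 1 * (Q 1 + 1)" using Q_Suc'[of 1] by (simp only: Suc_1)
  then show ?thesis unfolding Q_1 by simp
qed
lemma Q_3: "Q 3 = 42"
proof -
  have "Q 3 = Q 2 * (Q 2 + 1)" using Q_Suc'[of 2] by (simp only: numeral_3_eq_3 numeral_2_eq_2)
  then show ?thesis unfolding Q_2 by simp
qed
lemma A_1: "A 1 = 1/2" unfolding A_def Q_1 by simp
lemma A_2: "A 2 = 1/6" unfolding A_def Q_2 by simp
lemma A_3: "A 3 = 1/42" unfolding A_def Q_3 by simp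

lemma sum_g: "j \<le> k \<Longrightarrow> (\<Sum>i\<in>{Suc j..k}. 1 / real (sylv i)) = A j - A k"
proof (induction k rule: dec_induct)
  case base then show ?case by simp
next
  case (step k)
  have "{Suc j..Suc k} = insert (Suc k) {Suc j..k}" using step by auto
  then show ?case using step by (simp add: g_eq)
qed

lemma prod_g: "j \<le> k \<Longrightarrow> (\<Prod>i\<in>{Suc j..k}. 1 / real (sylv i)) = A k / A j"
proof (induction k rule: dec_induct)
  case base then show ?case using A_pos[of j] by simp
next
  case (step k)
  have "{Suc j..Suc k} = insert (Suc k) {Suc j..k}" using step by auto
  moreover have "1 / real (sylv (Suc k)) = A (Suc k) / A k"
  proof -
    have qk: "real (Q k) \<ge> 1" using Q_pos[of k] by simp
    then have "real (Q k) + real (Q k) * real (Q k) > 0" by (simp add: add_pos_pos)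
    then show ?thesis using qk unfolding A_def sylv_Suc_Q Q_Suc' by (simp add: field_simps)
  qed
  ultimately show ?case using step A_pos[of j] A_pos[of k] by (simp add: field_simps)
qed

lemma sylv_mono_Suc: "sylv (Suc i) \<le> sylv (Suc (Suc i))"
  using Q_pos[of i] by (simp add: sylv_Suc_Q Q_Suc')

lemma sylv_mono: assumes "1 \<le> i" "i \<le> j" shows "sylv i \<le> sylv j"
  using assms(2,1)
proof (induction j rule: dec_induct)
  case base then show ?case by simp
next
  case (step k) then show ?case using sylv_mono_Suc[of "k-1"] by (cases k) auto
qed

lemma Q_submult: "Q j * Q i \<le> Q (j + i)"
proof (induction i)
  case 0 then show ?case by simp
next
  case (Suc i)
  have "Q j * Q (Suc i) = (Q j * Q i) * sylv (Suc i)" by (simp add: Q_Suc)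
  also have "\<dots> \<le> Q (j + i) * sylv (Suc (j + i))"
    using Suc sylv_mono[of "Suc i" "Suc (j+i)"] by (intro mult_mono) auto
  also have "\<dots> = Q (j + Suc i)" by (simp add: Q_Suc)
  finally show ?case .
qed

lemma A_submult: "A (j + i) \<le> A j * A i"
proof -
  have "real (Q j) * real (Q i) \<le> real (Q (j+i))" using Q_submult[of j i] by (simp flip: of_nat_mult)
  moreover have "real (Q (j+i)) > 0" using Q_pos[of "j+i"] by simp
  ultimately show ?thesis using Q_pos[of j] Q_pos[of i] unfolding A_def by (simp add: field_simps)
qed

lemma sylv_le_Q: "1 \<le> i \<Longrightarrow> sylv i \<le> Q i"
  using Q_pos[of "i-1"] by (cases i) (auto simp: Q_Suc)

lemma sylv_minus1: "1 \<le> l \<Longrightarrow> real (sylv l) - 1 = real (Q (l - 1))"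
  by (cases l) (auto simp: sylv_Suc_Q)

lemma inv_sylv_ge_A: "1 \<le> i \<Longrightarrow> A i \<le> 1 / real (sylv i)"
  using sylv_le_Q[of i] sylv_ge2[of i] unfolding A_def by (simp add: frac_le)



lemma X_zero: "y \<in> Xset n \<Longrightarrow> i < 1 \<or> n < i \<Longrightarrow> y i = 0"
  unfolding Xset_def by auto
lemma X_sum: "y \<in> Xset n \<Longrightarrow> (\<Sum>i=1..n. y i) = 1"
  unfolding Xset_def by auto
lemma X_constr: "y \<in> Xset n \<Longrightarrow> 1 \<le> j \<Longrightarrow> j \<le> n - 1 \<Longrightarrow> (\<Prod>i=1..j. y i) \<le> (\<Sum>i=j+1..n. y i)"
  unfolding Xset_def by auto
lemma X_dec: assumes "y \<in> Xset n" "1 \<le> i" "i \<le> j" "j \<le> n" shows "y j \<le> y i"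
  using assms(3,4,2)
proof (induction j rule: dec_induct)
  case base then show ?case by simp
next
  case (step k)
  then have "y (k+1) \<le> y k" using assms(1) unfolding Xset_def by auto
  then show ?case using step by simp
qed
lemma X_nonneg: assumes "y \<in> Xset n" "1 \<le> i" "i \<le> n" shows "y i \<ge> 0"
proof -
  have "y n \<ge> 0" using assms(1) unfolding Xset_def by auto
  then show ?thesis using X_dec[OF assms(1,2,3) order_refl] by simp
qed
lemma X_n_pos: "y \<in> Xset n \<Longrightarrow> n \<ge> 1" 
  using X_sum[of y n] by (cases n) auto

lemma X_pos: assumes y: "y \<in> Xset n" and i: "1 \<le> i" "i \<le> n" shows "y i > 0"
proof (rule ccontr)
  assume "\<not> y i > 0"
  then have yi0: "y i = 0" using X_nonneg[OF y i] by simp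
  define j where "j = (LEAST j. 1 \<le> j \<and> y j = 0)"
  have jP: "1 \<le> j \<and> y j = 0" unfolding j_def by (rule LeastI[of _ i]) (use yi0 i in auto)
  have jle: "j \<le> i" unfolding j_def by (rule Least_le) (use yi0 i in auto)
  have below: "y k > 0" if "1 \<le> k" "k < j" for k
  proof -
    have "y k \<noteq> 0" using not_less_Least[of k "\<lambda>j. 1 \<le> j \<and> y j = 0"] that unfolding j_def by auto
    then show ?thesis using X_nonneg[OF y, of k] that jle i by auto
  qed
  have tail0: "(\<Sum>k=j..n. y k) = 0"
  proof (rule sum.neutral, intro ballI)
    fix k assume k: "k \<in> {j..n}"
    have "y k \<le> y j" using X_dec[OF y, of j k] jP k by auto
    moreover have "y k \<ge> 0" using X_nonneg[OF y, of k] jP k by auto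
    ultimately show "y k = 0" using jP by simp
  qed
  show False
  proof (cases "j = 1")
    case True
    then have "(\<Sum>k=1..n. y k) = 0" using tail0 by simp
    then show False using X_sum[OF y] by simp
  next
    case False
    then have j2: "j \<ge> 2" using jP by simp
    have "(\<Prod>k=1..j-1. y k) \<le> (\<Sum>k=j-1+1..n. y k)"
      using X_constr[OF y, of "j-1"] j2 jle i by auto
    also have "\<dots> = 0" using tail0 j2 by simp
    finally have "(\<Prod>k=1..j-1. y k) \<le> 0" .
    moreover have "(\<Prod>k=1..j-1. y k) > 0" by (rule prod_pos) (use below j2 in auto)
    ultimately show False by simp
  qed
qed

lemma abel_dec:
  fixes w d :: "nat \<Rightarrow> real"
  assumes "p \<le> q" "\<And>i. p \<le> i \<Longrightarrow> i < q \<Longrightarrow> w (Suc i) \<le> w i" "\<And>i. p \<le> i \<Longrightarrow> i \<le> q \<Longrightarrow> w i \<ge> 0"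
    "\<And>t. p \<le> t \<Longrightarrow> t \<le> q \<Longrightarrow> (\<Sum>i=p..t. d i) \<le> 0"
  shows "(\<Sum>i=p..q. w i * d i) \<le> 0"
proof -
  have "(\<Sum>i=p..t. w i * d i) \<le> w t * (\<Sum>i=p..t. d i)" if "p \<le> t" "t \<le> q" for t
    using that
  proof (induction t rule: dec_induct)
    case base then show ?case by simp
  next
    case (step k)
    have "(\<Sum>i=p..Suc k. w i * d i) = (\<Sum>i=p..k. w i * d i) + w (Suc k) * d (Suc k)"
      using step by simp
    also have "\<dots> \<le> w k * (\<Sum>i=p..k. d i) + w (Suc k) * d (Suc k)" using step by simp
    also have "\<dots> \<le> w (Suc k) * (\<Sum>i=p..k. d i) + w (Suc k) * d (Suc k)"
    proof -
      have "(w k - w (Suc k)) * (\<Sum>i=p..k. d i) \<le> 0"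
        using assms(2)[of k] assms(4)[of k] step by (intro mult_nonneg_nonpos) auto
      then show ?thesis by (simp add: algebra_simps)
    qed
    also have "\<dots> = w (Suc k) * (\<Sum>i=p..Suc k. d i)" using step by (simp add: algebra_simps)
    finally show ?case .
  qed
  from this[of q] assms(1) have "(\<Sum>i=p..q. w i * d i) \<le> w q * (\<Sum>i=p..q. d i)" by simp
  also have "\<dots> \<le> 0" using assms(3)[of q] assms(4)[of q] assms(1) by (intro mult_nonneg_nonpos) auto
  finally show ?thesis .
qed

lemma abel_inc:
  fixes w e :: "nat \<Rightarrow> real"
  assumes "p \<le> q" "\<And>i. p \<le> i \<Longrightarrow> i < q \<Longrightarrow> w i \<le> w (Suc i)" "\<And>i. p \<le> i \<Longrightarrow> i \<le> q \<Longrightarrow> w i \<ge> 0"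
    "\<And>t. p \<le> t \<Longrightarrow> t \<le> q \<Longrightarrow> (\<Sum>i=t..q. e i) \<ge> 0"
  shows "(\<Sum>i=p..q. w i * e i) \<ge> 0"
proof -
  have "(\<Sum>i=t..q. w i * e i) \<ge> w t * (\<Sum>i=t..q. e i)" if "t \<le> q" "p \<le> t" for t
    using that
  proof (induction t rule: inc_induct)
    case base then show ?case by simp
  next
    case (step k)
    have eq1: "{k..q} = insert k {Suc k..q}" using step by auto
    have a1: "w k * (\<Sum>i=Suc k..q. e i) \<le> w (Suc k) * (\<Sum>i=Suc k..q. e i)"
      using assms(2)[of k] assms(4)[of "Suc k"] step by (intro mult_right_mono) auto
    have "w k * (\<Sum>i=k..q. e i) = w k * e k + w k * (\<Sum>i=Suc k..q. e i)"
      unfolding eq1 by (simp add: algebra_simps)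
    also have "\<dots> \<le> w k * e k + w (Suc k) * (\<Sum>i=Suc k..q. e i)" using a1 by simp
    also have "\<dots> \<le> w k * e k + (\<Sum>i=Suc k..q. w i * e i)" using step by simp
    also have "\<dots> = (\<Sum>i=k..q. w i * e i)" unfolding eq1 by simp
    finally show ?case .
  qed
  from this[of p] assms(1) have "(\<Sum>i=p..q. w i * e i) \<ge> w p * (\<Sum>i=p..q. e i)" by simp
  moreover have "w p * (\<Sum>i=p..q. e i) \<ge> 0" using assms(3)[of p] assms(4)[of p] assms(1) by simp
  ultimately show ?thesis by linarith
qed

lemma ln_strict: fixes x :: real assumes "x > 0" "x \<noteq> 1" shows "ln x < x - 1"
proof -
  have s: "sqrt x > 0" using assms by simp
  have "ln x = 2 * ln (sqrt x)" using assms by (simp add: ln_sqrt)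
  also have "\<dots> \<le> 2 * (sqrt x - 1)" using ln_le_minus_one[OF s] by simp
  also have "\<dots> < x - 1"
  proof -
    have "sqrt x \<noteq> 1" using assms by auto
    then have "(sqrt x - 1)^2 > 0" by simp
    then show ?thesis using assms by (simp add: power2_eq_square algebra_simps)
  qed
  finally show ?thesis .
qed

lemma tomic_weyl:
  fixes y g :: "nat \<Rightarrow> real"
  assumes "p \<le> q" "\<And>i. p \<le> i \<Longrightarrow> i \<le> q \<Longrightarrow> y i > 0" "\<And>i. p \<le> i \<Longrightarrow> i \<le> q \<Longrightarrow> g i > 0"
    "\<And>i. p \<le> i \<Longrightarrow> i < q \<Longrightarrow> y (Suc i) \<le> y i"
    "\<And>t. p \<le> t \<Longrightarrow> t \<le> q \<Longrightarrow> (\<Prod>i=p..t. y i) \<le> (\<Prod>i=p..t. g i)"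
  shows "(\<Sum>i=p..q. y i) \<le> (\<Sum>i=p..q. g i)"
proof -
  define d where "d i = ln (y i) - ln (g i)" for i
  have 1: "(\<Sum>i=p..q. y i * d i) \<le> 0"
  proof (rule abel_dec[OF assms(1)])
    show "y (Suc i) \<le> y i" if "p \<le> i" "i < q" for i using assms(4) that .
    show "0 \<le> y i" if "p \<le> i" "i \<le> q" for i using assms(2) that by fastforce
    fix t assume t: "p \<le> t" "t \<le> q"
    have ly: "ln (\<Prod>i=p..t. y i) = (\<Sum>i=p..t. ln (y i))"
      by (rule ln_prod) (use t assms(2) in force)+
    have lg: "ln (\<Prod>i=p..t. g i) = (\<Sum>i=p..t. ln (g i))"
      by (rule ln_prod) (use t assms(3) in force)+
    have "(\<Sum>i=p..t. d i) = ln (\<Prod>i=p..t. y i) - ln (\<Prod>i=p..t. g i)"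
      unfolding d_def ly lg by (simp add: sum_subtractf)
    also have "\<dots> \<le> 0"
    proof -
      have "(\<Prod>i=p..t. y i) > 0" using t assms(2) by (intro prod_pos) auto
      then show ?thesis using assms(5)[OF t] by simp
    qed
    finally show "(\<Sum>i=p..t. d i) \<le> 0" .
  qed
  have 2: "y i - g i \<le> y i * d i" if "p \<le> i" "i \<le> q" for i
  proof -
    have yp: "y i > 0" and gp: "g i > 0" using assms(2,3) that by auto
    have "ln (g i / y i) \<le> g i / y i - 1" using ln_le_minus_one[of "g i / y i"] yp gp by simp
    then have "ln (g i) - ln (y i) \<le> g i / y i - 1" using yp gp by (simp add: ln_div)
    then have "y i * (ln (g i) - ln (y i)) \<le> y i * (g i / y i - 1)" using yp by (simp add: mult_left_mono)
    then show ?thesis using yp unfolding d_def by (simp add: algebra_simps)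
  qed
  have "(\<Sum>i=p..q. y i) - (\<Sum>i=p..q. g i) = (\<Sum>i=p..q. y i - g i)" by (simp add: sum_subtractf)
  also have "\<dots> \<le> (\<Sum>i=p..q. y i * d i)" using 2 by (intro sum_mono) auto
  finally show ?thesis using 1 by simp
qed



lemma prod_split: fixes f :: "nat \<Rightarrow> real"
  assumes "a \<le> Suc k" "k \<le> t" shows "(\<Prod>i=a..t. f i) = (\<Prod>i=a..k. f i) * (\<Prod>i=Suc k..t. f i)"
proof -
  have "{a..t} = {a..k} \<union> {Suc k..t}" using assms by auto
  moreover have "{a..k} \<inter> {Suc k..t} = {}" by auto
  ultimately show ?thesis by (simp add: prod.union_disjoint)
qed

lemma sum_split: fixes f :: "nat \<Rightarrow> real"
  assumes "a \<le> Suc k" "k \<le> t" shows "(\<Sum>i=a..t. f i) = (\<Sum>i=a..k. f i) + (\<Sum>i=Suc k..t. f i)"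
proof -
  have "{a..t} = {a..k} \<union> {Suc k..t}" using assms by auto
  moreover have "{a..k} \<inter> {Suc k..t} = {}" by auto
  ultimately show ?thesis by (simp add: sum.union_disjoint)
qed

lemma X_step: "y \<in> Xset n \<Longrightarrow> 1 \<le> i \<Longrightarrow> i < n \<Longrightarrow> y (Suc i) \<le> y i"
  unfolding Xset_def by auto

lemma L_lemma: assumes y: "y \<in> Xset n" and m: "m < n"
  shows "(\<Sum>i=Suc m..n. y i) \<ge> A m"
proof -
  define P where "P k = (\<Prod>i=1..k. y i)" for k
  define K where "K = {k. k \<le> m \<and> (k = 0 \<or> P k \<ge> A k)}"
  have finK: "finite K" unfolding K_def by auto
  have "0 \<in> K" unfolding K_def by auto
  then have K_ne: "K \<noteq> {}" by auto
  define k where "k = Max K"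
  have kK: "k \<in> K" unfolding k_def using finK K_ne by (rule Max_in)
  have km: "k \<le> m" using kK unfolding K_def by auto
  have notK: "P t < A t" if "k < t" "t \<le> m" for t
  proof -
    have "t \<notin> K" using that Max_ge[OF finK, of t] unfolding k_def by auto
    then show ?thesis using that unfolding K_def by auto
  qed
  have Pk: "P k \<ge> A k" using kK unfolding K_def P_def by auto
  have Tk: "(\<Sum>i=Suc k..n. y i) \<ge> A k"
  proof (cases "k = 0")
    case True then show ?thesis using X_sum[OF y] by simp
  next
    case False
    have "P k \<le> (\<Sum>i=k+1..n. y i)" unfolding P_def using X_constr[OF y, of k] False km m by auto
    then show ?thesis using Pk by simp
  qed
  show ?thesis
  proof (cases "k = m")
    case True then show ?thesis using Tk by simp
  next
    case False
    then have km': "k < m" using km by simp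
    have ypos: "y i > 0" if "1 \<le> i" "i \<le> n" for i using X_pos[OF y that] .
    have Pkpos: "P k > 0" unfolding P_def by (rule prod_pos) (use ypos km m in auto)
    have tw: "(\<Sum>i=Suc k..m. y i) \<le> (\<Sum>i=Suc k..m. 1 / real (sylv i))"
    proof (rule tomic_weyl)
      show "Suc k \<le> m" using km' by simp
      show "0 < y i" if "Suc k \<le> i" "i \<le> m" for i using ypos that m by auto
      show "0 < 1 / real (sylv i)" if "Suc k \<le> i" "i \<le> m" for i using sylv_ge2[of i] that by auto
      show "y (Suc i) \<le> y i" if "Suc k \<le> i" "i < m" for i using X_step[OF y] that m by auto
      fix t assume t: "Suc k \<le> t" "t \<le> m"
      have "P t = P k * (\<Prod>i=Suc k..t. y i)" unfolding P_def by (rule prod_split) (use t in auto)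
      then have eq: "(\<Prod>i=Suc k..t. y i) = P t / P k" using Pkpos by simp
      have "P t / P k \<le> A t / A k"
      proof -
        have "P t / P k \<le> A t / P k" using notK[of t] t Pkpos by (simp add: divide_right_mono)
        also have "\<dots> \<le> A t / A k" using Pk A_pos[of k] A_pos[of t] by (simp add: frac_le)
        finally show ?thesis .
      qed
      then show "(\<Prod>i=Suc k..t. y i) \<le> (\<Prod>i=Suc k..t. 1 / real (sylv i))"
        using eq prod_g[of k t] t by simp
    qed
    have "(\<Sum>i=Suc k..n. y i) = (\<Sum>i=Suc k..m. y i) + (\<Sum>i=Suc m..n. y i)"
      by (rule sum_split) (use km' m in auto)
    then show ?thesis using Tk tw sum_g[of k m] km' by simp
  qed
qed

lemma xb_ge: assumes y: "y \<in> Xset n" and b: "1 \<le> b" "b \<le> n"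
  shows "y b \<ge> A (b - 1) / real (n - b + 1)"
proof -
  have "A (b-1) \<le> (\<Sum>i=Suc (b-1)..n. y i)" using L_lemma[OF y, of "b-1"] b by simp
  also have "\<dots> = (\<Sum>i=b..n. y i)" using b by simp
  also have "\<dots> \<le> (\<Sum>i=b..n. y b)" using X_dec[OF y, of b] b by (intro sum_mono) auto
  also have "\<dots> = real (n - b + 1) * y b" using b by simp
  finally show ?thesis using b by (simp add: divide_le_eq mult.commute)
qed



definition cc :: "nat \<Rightarrow> nat \<Rightarrow> real" where "cc n l = A (l - 1) / real (n - l + 1)"

lemma cc_pos: "0 < cc n l" using A_pos by (simp add: cc_def)
lemma cc_le_A: "cc n l \<le> A (l - 1)"
  using A_pos[of "l-1"] by (simp add: cc_def divide_le_eq)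
lemma cc_le1: "cc n l \<le> 1" using cc_le_A A_le1 order_trans by blast

lemma xbar_lo: "1 \<le> i \<Longrightarrow> i < l \<Longrightarrow> xbar n l i = 1 / real (sylv i)"
  by (simp add: xbar_def)
lemma xbar_hi: "1 \<le> l \<Longrightarrow> l \<le> i \<Longrightarrow> i \<le> n \<Longrightarrow> xbar n l i = cc n l"
  unfolding xbar_def cc_def A_def using sylv_minus1[of l] by auto
lemma xbar_out: "1 \<le> l \<Longrightarrow> l \<le> n \<Longrightarrow> i < 1 \<or> n < i \<Longrightarrow> xbar n l i = 0"
  unfolding xbar_def by auto

lemma xbar_sum_lo: "j \<le> k \<Longrightarrow> k < l \<Longrightarrow> (\<Sum>i=Suc j..k. xbar n l i) = A j - A k"
  using sum_g[of j k] by (simp add: xbar_lo)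

lemma xbar_prod_lo: "j \<le> k \<Longrightarrow> k < l \<Longrightarrow> (\<Prod>i=Suc j..k. xbar n l i) = A k / A j"
  using prod_g[of j k] by (simp add: xbar_lo)

lemma xbar_sum_hi: "1 \<le> l \<Longrightarrow> l \<le> p \<Longrightarrow> q \<le> n \<Longrightarrow> (\<Sum>i=p..q. xbar n l i) = real (Suc q - p) * cc n l"
  by (simp add: xbar_hi)

lemma xbar_prod_hi: "1 \<le> l \<Longrightarrow> l \<le> p \<Longrightarrow> q \<le> n \<Longrightarrow> (\<Prod>i=p..q. xbar n l i) = cc n l ^ (Suc q - p)"
  by (simp add: xbar_hi)

lemma xbar_tail: assumes l: "1 \<le> l" "l \<le> n" and j: "j < l"
  shows "(\<Sum>i=Suc j..n. xbar n l i) = A j"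
proof -
  have "(\<Sum>i=Suc j..n. xbar n l i) = (\<Sum>i=Suc j..l-1. xbar n l i) + (\<Sum>i=Suc (l-1)..n. xbar n l i)"
    by (rule sum_split) (use l j in auto)
  also have "(\<Sum>i=Suc j..l-1. xbar n l i) = A j - A (l-1)" by (rule xbar_sum_lo) (use l j in auto)
  also have "(\<Sum>i=Suc (l-1)..n. xbar n l i) = real (Suc n - l) * cc n l"
    using xbar_sum_hi[of l l n n] l by simp
  also have "\<dots> = A (l - 1)" unfolding cc_def using l by (simp add: Suc_diff_le)
  finally show ?thesis by simp
qed

lemma xbar_mem: assumes l: "1 \<le> l" "l \<le> n" shows "xbar n l \<in> Xset n"
proof -
  let ?x = "xbar n l"
  have out: "\<forall>i. i \<notin> {1..n} \<longrightarrow> ?x i = 0" using xbar_out[OF l] by auto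
  have sum1: "(\<Sum>i=1..n. ?x i) = 1" using xbar_tail[OF l, of 0] l by simp
  have le1: "?x i \<le> 1" if "1 \<le> i" "i \<le> n" for i
  proof (cases "i < l")
    case True then show ?thesis using xbar_lo[of i l n] that sylv_ge2[of i] by simp
  next
    case False then show ?thesis using xbar_hi[of l i n] that l cc_le1 by simp
  qed
  have ord: "?x (i+1) \<le> ?x i" if "1 \<le> i" "i < n" for i
  proof (cases "i + 1 < l")
    case True
    then show ?thesis using xbar_lo[of i l n] xbar_lo[of "i+1" l n] that sylv_mono[of i "i+1"] sylv_ge2[of i]
      by (simp add: frac_le)
  next
    case False
    show ?thesis
    proof (cases "i + 1 = l")
      case True
      have "?x (i+1) = cc n l" using xbar_hi[of l "i+1" n] True l by simp
      also have "\<dots> \<le> A i" using cc_le_A[of n l] True by (metis diff_Suc_1 Suc_eq_plus1)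
      also have "\<dots> \<le> 1 / real (sylv i)" using inv_sylv_ge_A that by simp
      also have "\<dots> = ?x i" using xbar_lo[of i l n] that True by simp
      finally show ?thesis .
    next
      case False
      then show ?thesis using \<open>\<not> i + 1 < l\<close> xbar_hi[of l i n] xbar_hi[of l "i+1" n] that l by simp
    qed
  qed
  have xn: "?x n \<ge> 0" using xbar_hi[of l n n] l cc_pos[of n l] by simp
  have con: "(\<Prod>i=1..j. ?x i) \<le> (\<Sum>i=j+1..n. ?x i)" if j: "1 \<le> j" "j \<le> n - 1" for j
  proof (cases "j < l")
    case True
    have "(\<Prod>i=1..j. ?x i) = A j" using xbar_prod_lo[of 0 j l n] True by simp
    also have "\<dots> = (\<Sum>i=j+1..n. ?x i)" using xbar_tail[OF l True] by simp
    finally show ?thesis by simp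
  next
    case False
    have "(\<Prod>i=1..j. ?x i) = (\<Prod>i=1..l-1. ?x i) * (\<Prod>i=Suc (l-1)..j. ?x i)"
      by (rule prod_split) (use False l in auto)
    also have "(\<Prod>i=1..l-1. ?x i) = A (l - 1)" using xbar_prod_lo[of 0 "l-1" l n] l by simp
    also have "(\<Prod>i=Suc (l-1)..j. ?x i) = cc n l ^ (Suc j - l)"
      using xbar_prod_hi[of l l j n] l False j by simp
    also have "A (l - 1) * cc n l ^ (Suc j - l) \<le> 1 * cc n l"
    proof (rule mult_mono)
      show "A (l - 1) \<le> 1" by (rule A_le1)
      have "Suc j - l \<ge> 1" using False by simp
      then show "cc n l ^ (Suc j - l) \<le> cc n l"
        using cc_pos[of n l] cc_le1[of n l] by (simp add: power_le_imp_le_exp power_decreasing[of 1 _ "cc n l", simplified])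
    qed (use cc_pos[of n l] in auto)
    also have "\<dots> \<le> real (n - j) * cc n l" using j cc_pos[of n l] by simp
    also have "\<dots> = (\<Sum>i=j+1..n. ?x i)" using xbar_sum_hi[of l "j+1" n n] False l j by simp
    finally show ?thesis .
  qed
  show ?thesis unfolding Xset_def using out sum1 le1[of 1] l ord xn con by auto
qed



lemma cc_NN: "cc N N = A (N - 1)" by (simp add: cc_def)

lemma xbarN_prod: assumes "1 \<le> a" "a \<le> N"
  shows "(\<Prod>i=a..N. xbar N N i) = A (N - 1) ^ 2 / A (a - 1)"
proof -
  have "(\<Prod>i=a..N. xbar N N i) = (\<Prod>i=a..N-1. xbar N N i) * (\<Prod>i=Suc (N-1)..N. xbar N N i)"
    by (rule prod_split) (use assms in auto)
  also have "(\<Prod>i=a..N-1. xbar N N i) = (\<Prod>i=Suc (a-1)..N-1. xbar N N i)" using assms by simp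
  also have "\<dots> = A (N-1) / A (a-1)" by (rule xbar_prod_lo) (use assms in auto)
  also have "(\<Prod>i=Suc (N-1)..N. xbar N N i) = A (N - 1)"
    using assms xbar_hi[of N N N] cc_NN[of N] by simp
  finally show ?thesis by (simp add: power2_eq_square)
qed

lemma D_lemma: assumes y: "y \<in> Xset N" and a: "1 \<le> a" "a \<le> N"
  shows "(\<Prod>i=a..N. xbar N N i) \<le> (\<Prod>i=a..N. y i) \<and>
         ((\<Prod>i=a..N. y i) = (\<Prod>i=a..N. xbar N N i) \<longrightarrow> (\<forall>i\<in>{a..N}. y i = xbar N N i))"
proof -
  let ?h = "xbar N N"
  have ypos: "y i > 0" if "a \<le> i" "i \<le> N" for i using X_pos[OF y] that a by auto
  have hpos: "?h i > 0" if "a \<le> i" "i \<le> N" for i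
  proof (cases "i < N")
    case True then show ?thesis using xbar_lo[of i N N] that a sylv_ge2[of i] by simp
  next
    case False then show ?thesis using xbar_hi[of N i N] that a cc_pos by simp
  qed
  define r where "r i = ln (y i / ?h i) - (1 - ?h i / y i)" for i
  have r_nonneg: "r i \<ge> 0" if "a \<le> i" "i \<le> N" for i
  proof -
    have "ln (?h i / y i) \<le> ?h i / y i - 1" using ln_le_minus_one ypos[OF that] hpos[OF that] by simp
    then show ?thesis unfolding r_def using ypos[OF that] hpos[OF that] by (simp add: ln_div)
  qed
  have abel: "(\<Sum>i=a..N. (1 / y i) * (y i - ?h i)) \<ge> 0"
  proof (rule abel_inc)
    show "a \<le> N" using a by simp
    show "1 / y i \<le> 1 / y (Suc i)" if "a \<le> i" "i < N" for i
      using X_step[OF y, of i] that a ypos[of i] ypos[of "Suc i"] by (simp add: frac_le)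
    show "0 \<le> 1 / y i" if "a \<le> i" "i \<le> N" for i using ypos[OF that] by simp
    fix t assume t: "a \<le> t" "t \<le> N"
    have e1: "(\<Sum>i=t..N. y i - ?h i) = (\<Sum>i=Suc (t-1)..N. y i) - (\<Sum>i=Suc (t-1)..N. ?h i)"
      using t a by (simp add: sum_subtractf)
    have e2: "(\<Sum>i=Suc (t-1)..N. ?h i) = A (t - 1)" by (rule xbar_tail) (use t a in auto)
    have e3: "(\<Sum>i=Suc (t-1)..N. y i) \<ge> A (t - 1)" by (rule L_lemma[OF y]) (use t a in auto)
    show "(\<Sum>i=t..N. y i - ?h i) \<ge> 0" using e1 e2 e3 by simp
  qed
  have eqw: "(\<Sum>i=a..N. (1 / y i) * (y i - ?h i)) = (\<Sum>i=a..N. 1 - ?h i / y i)"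
  proof (rule sum.cong)
    fix x assume "x \<in> {a..N}"
    then have "y x > 0" using ypos by auto
    then show "1 / y x * (y x - ?h x) = 1 - ?h x / y x" by (simp add: field_simps)
  qed simp
  have lnP: "ln (\<Prod>i=a..N. y i) - ln (\<Prod>i=a..N. ?h i) = (\<Sum>i=a..N. ln (y i / ?h i))"
  proof -
    have "ln (\<Prod>i=a..N. y i) = (\<Sum>i=a..N. ln (y i))" by (rule ln_prod) (use ypos in force)+
    moreover have "ln (\<Prod>i=a..N. ?h i) = (\<Sum>i=a..N. ln (?h i))" by (rule ln_prod) (use hpos in force)+
    moreover have "(\<Sum>i=a..N. ln (y i / ?h i)) = (\<Sum>i=a..N. ln (y i) - ln (?h i))"
    proof (rule sum.cong)
      fix x assume "x \<in> {a..N}"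
      then have "y x > 0" "?h x > 0" using ypos hpos by auto
      then show "ln (y x / ?h x) = ln (y x) - ln (?h x)" by (simp add: ln_div)
    qed simp
    ultimately show ?thesis by (simp add: sum_subtractf)
  qed
  have sumr: "(\<Sum>i=a..N. ln (y i / ?h i)) = (\<Sum>i=a..N. r i) + (\<Sum>i=a..N. 1 - ?h i / y i)"
    unfolding r_def by (simp add: sum.distrib[symmetric])
  have rsum: "(\<Sum>i=a..N. r i) \<ge> 0" using r_nonneg by (intro sum_nonneg) auto
  have Pypos: "(\<Prod>i=a..N. y i) > 0" using ypos by (intro prod_pos) auto
  have Phpos: "(\<Prod>i=a..N. ?h i) > 0" using hpos by (intro prod_pos) auto
  have ge: "ln (\<Prod>i=a..N. y i) - ln (\<Prod>i=a..N. ?h i) \<ge> (\<Sum>i=a..N. r i)"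
    using lnP sumr abel eqw by simp
  have part1: "(\<Prod>i=a..N. ?h i) \<le> (\<Prod>i=a..N. y i)"
  proof -
    have "ln (\<Prod>i=a..N. ?h i) \<le> ln (\<Prod>i=a..N. y i)" using ge rsum by linarith
    then show ?thesis using Pypos Phpos by simp
  qed
  have part2: "\<forall>i\<in>{a..N}. y i = ?h i" if eq: "(\<Prod>i=a..N. y i) = (\<Prod>i=a..N. ?h i)"
  proof
    fix i assume i: "i \<in> {a..N}"
    have "(\<Sum>i=a..N. r i) \<le> 0" using ge eq by simp
    then have "(\<Sum>i=a..N. r i) = 0" using rsum by simp
    then have r0: "r i = 0" using sum_nonneg_eq_0_iff[of "{a..N}" r] r_nonneg i by auto
    show "y i = ?h i"
    proof (rule ccontr)
      assume ne: "y i \<noteq> ?h i"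
      have yp: "y i > 0" and hp: "?h i > 0" using ypos hpos i by auto
      then have "?h i / y i \<noteq> 1" using ne by (simp add: divide_eq_1_iff)
      then have "ln (?h i / y i) < ?h i / y i - 1" using ln_strict yp hp by simp
      then have "r i > 0" unfolding r_def using yp hp by (simp add: ln_div)
      then show False using r0 by simp
    qed
  qed
  show ?thesis using part1 part2 by blast
qed



lemma mkX:
  fixes v :: "nat \<Rightarrow> real"
  assumes out: "\<And>i. i < 1 \<or> N < i \<Longrightarrow> v i = 0"
    and s1: "(\<Sum>i=1..N. v i) = 1" and v1: "v 1 \<le> 1"
    and ord: "\<And>i. 1 \<le> i \<Longrightarrow> i < N \<Longrightarrow> v (i+1) \<le> v i"
    and vlast: "v N \<ge> 0"
    and con: "\<And>j. 1 \<le> j \<Longrightarrow> j \<le> N - 1 \<Longrightarrow> (\<Prod>i=1..j. v i) \<le> (\<Sum>i=j+1..N. v i)"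
  shows "v \<in> Xset N"
  unfolding Xset_def mem_Collect_eq
proof (intro conjI)
  show "\<forall>i. i \<notin> {1..N} \<longrightarrow> v i = 0" using out by auto
qed (use s1 v1 ord vlast con in auto)


lemma collapse_bound:
  assumes y: "y \<in> Xset n" and a: "1 \<le> a" "a \<le> Suc k" and k: "1 \<le> k" "k < n"
    and bal: "(\<Sum>i=Suc k..n. y i) \<le> y k"
  shows "(\<Prod>i=a..k. y i) * (\<Sum>i=Suc k..n. y i) \<ge> A k ^ 2 / A (a - 1)"
proof -
  define T where "T = (\<Sum>i=Suc k..n. y i)"
  define v where "v i = (if 1 \<le> i \<and> i \<le> k then y i else if i = Suc k then T else 0)" for i
  have Tpos: "T > 0" using L_lemma[OF y k(2)] A_pos[of k] unfolding T_def by simp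
  have tailv: "(\<Sum>i=Suc j..Suc k. v i) = (\<Sum>i=Suc j..n. y i)" if "j \<le> k" for j
  proof -
    have "(\<Sum>i=Suc j..Suc k. v i) = (\<Sum>i=Suc j..k. v i) + (\<Sum>i=Suc k..Suc k. v i)"
      by (rule sum_split) (use that in auto)
    also have "(\<Sum>i=Suc j..k. v i) = (\<Sum>i=Suc j..k. y i)" by (rule sum.cong) (auto simp: v_def)
    also have "(\<Sum>i=Suc k..Suc k. v i) = T" by (simp add: v_def)
    also have "(\<Sum>i=Suc j..k. y i) + T = (\<Sum>i=Suc j..n. y i)"
      unfolding T_def by (rule sum_split[symmetric]) (use that k in auto)
    finally show ?thesis .
  qed
  have prodv: "(\<Prod>i=p..q. v i) = (\<Prod>i=p..q. y i)" if "1 \<le> p" "q \<le> k" for p q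
    by (rule prod.cong) (use that in \<open>auto simp: v_def\<close>)
  have vX: "v \<in> Xset (Suc k)"
  proof -
    have s1: "(\<Sum>i=1..Suc k. v i) = 1" using tailv[of 0] X_sum[OF y] by simp
    have y1: "y 1 \<le> 1" using y unfolding Xset_def by blast
    have v1: "v 1 \<le> 1" using y1 k by (simp add: v_def)
    have ord: "v (i+1) \<le> v i" if "1 \<le> i" "i < Suc k" for i
    proof (cases "i < k")
      case True then show ?thesis using X_step[OF y, of i] that k by (simp add: v_def)
    next
      case False then have "i = k" using that by simp
      then show ?thesis using bal that unfolding v_def T_def by simp
    qed
    have vlast: "v (Suc k) \<ge> 0" using Tpos by (simp add: v_def)
    have con: "(\<Prod>i=1..j. v i) \<le> (\<Sum>i=j+1..Suc k. v i)" if "1 \<le> j" "j \<le> Suc k - 1" for j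
    proof -
      have "(\<Prod>i=1..j. v i) = (\<Prod>i=1..j. y i)" using prodv[of 1 j] that by simp
      also have "\<dots> \<le> (\<Sum>i=j+1..n. y i)" using X_constr[OF y, of j] that k by auto
      also have "\<dots> = (\<Sum>i=j+1..Suc k. v i)" using tailv[of j] that by simp
      finally show ?thesis .
    qed
    have out: "v i = 0" if "i < 1 \<or> Suc k < i" for i using that by (auto simp: v_def)
    show ?thesis by (rule mkX[OF out s1 v1 ord vlast con])
  qed
  have D: "(\<Prod>i=a..Suc k. xbar (Suc k) (Suc k) i) \<le> (\<Prod>i=a..Suc k. v i)"
    using conjunct1[OF D_lemma[OF vX a]] .
  have xb: "(\<Prod>i=a..Suc k. xbar (Suc k) (Suc k) i) = A k ^ 2 / A (a - 1)"
    using xbarN_prod[of a "Suc k"] a by simp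
  have "(\<Prod>i=a..Suc k. v i) = (\<Prod>i=a..k. v i) * (\<Prod>i=Suc k..Suc k. v i)"
    by (rule prod_split) (use a in auto)
  also have "\<dots> = (\<Prod>i=a..k. y i) * T"
  proof -
    have "(\<Prod>i=a..k. v i) = (\<Prod>i=a..k. y i)" by (rule prod.cong) (use a in \<open>auto simp: v_def\<close>)
    then show ?thesis by (simp add: v_def)
  qed
  finally have eqP: "(\<Prod>i=a..Suc k. v i) = (\<Prod>i=a..k. y i) * T" .
  show ?thesis unfolding T_def[symmetric] using D eqP xb by linarith
qed



fun Cm :: "nat \<Rightarrow> real" where
  "Cm 0 = 1"
| "Cm (Suc 0) = 1"
| "Cm (Suc (Suc 0)) = 1/2"
| "Cm (Suc (Suc (Suc 0))) = 1/9"
| "Cm (Suc (Suc (Suc (Suc 0)))) = 1/72"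
| "Cm (Suc (Suc (Suc (Suc (Suc m))))) = Cm (Suc (Suc (Suc (Suc m)))) / (real (m + 5) * 2 ^ (m + 3))"

lemma Cm_pos: "Cm m > 0"
  by (induction m rule: Cm.induct) auto

lemma Cm_step: "m \<ge> 4 \<Longrightarrow> Cm (Suc m) = Cm m / (real (Suc m) * 2 ^ (m - 1))"
proof -
  assume "m \<ge> 4"
  then obtain k where "m = 4 + k" using le_Suc_ex by blast
  then have "m = Suc (Suc (Suc (Suc k)))" by simp
  then show ?thesis by (simp add: add.commute power_add)
qed

lemma tail_lemma:
  fixes z :: "nat \<Rightarrow> real"
  assumes "q = p + d" "d \<ge> 1"
    "\<And>i. p \<le> i \<Longrightarrow> i < q \<Longrightarrow> z (Suc i) \<le> z i"
    "\<And>i. p \<le> i \<Longrightarrow> i \<le> q \<Longrightarrow> z i \<ge> 0"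
    "\<And>j. p \<le> j \<Longrightarrow> j + 2 \<le> q \<Longrightarrow> z j < (\<Sum>i=Suc j..q. z i)"
  shows "(\<Prod>i=p..q-1. z i) \<ge> Cm (Suc d) * (\<Sum>i=p..q. z i) ^ d"
  using assms
proof (induction d arbitrary: p)
  case 0 then show ?case by simp
next
  case (Suc d)
  note dec = Suc.prems(3) and nn = Suc.prems(4) and bal = Suc.prems(5)
  define R where "R = (\<Sum>i=Suc p..q. z i)"
  define nu where "nu = (\<Sum>i=p..q. z i)"
  have nuR: "nu = z p + R" unfolding nu_def R_def using Suc.prems(1)
    by (simp add: sum.atLeast_Suc_atMost)
  have zmax: "z i \<le> z p" if "p \<le> i" "i \<le> q" for i
    using that
  proof (induction i rule: dec_induct)
    case base then show ?case by simp
  next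
    case (step k) then show ?case using dec[of k] by simp
  qed
  have nu_le: "nu \<le> real (Suc (Suc d)) * z p"
  proof -
    have "nu \<le> (\<Sum>i=p..q. z p)" unfolding nu_def by (intro sum_mono) (use zmax in auto)
    also have "\<dots> = real (Suc (Suc d)) * z p" using Suc.prems(1) by simp
    finally show ?thesis .
  qed
  have zp0: "z p \<ge> 0" using nn[of p] Suc.prems(1) by simp
  have R0: "R \<ge> 0" unfolding R_def by (intro sum_nonneg) (use nn Suc.prems(1) in auto)
  show ?case
  proof (cases "d = 0")
    case True
    then have q: "q = Suc p" using Suc.prems(1) by simp
    have "z q \<le> z p" using dec[of p] q by simp
    then show ?thesis using q True unfolding nu_def by simp
  next
    case False
    then have d1: "d \<ge> 1" by simp
    have zR: "z p < R" unfolding R_def using bal[of p] Suc.prems(1) d1 by simp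
    have IH: "(\<Prod>i=Suc p..q-1. z i) \<ge> Cm (Suc d) * R ^ d"
      unfolding R_def
      by (rule Suc.IH[of "Suc p"]) (use Suc.prems d1 in auto)
    have prodeq: "(\<Prod>i=p..q-1. z i) = z p * (\<Prod>i=Suc p..q-1. z i)"
      using Suc.prems(1) d1 by (simp add: prod.atLeast_Suc_atMost)
    have "z p * (Cm (Suc d) * R ^ d) \<ge> Cm (Suc (Suc d)) * nu ^ Suc d"
    proof (cases "d = 1")
      case True
      have R2: "R \<le> 2 * z p" using nu_le nuR True by simp
      have key: "9 * (z p * R) - 2 * (z p + R)^2 = (2 * z p - R) * (2 * R - z p)"
        by (simp add: power2_eq_square algebra_simps)
      have "(2 * z p - R) * (2 * R - z p) \<ge> 0" using R2 zR zp0 by (intro mult_nonneg_nonneg) auto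
      then have "nu ^ 2 / 9 \<le> z p * (R / 2)" using key nuR by simp
      then show ?thesis using True by (simp add: numeral_2_eq_2 power2_eq_square)
    next
      case False
      show ?thesis
      proof (cases "d = 2")
        case True
        have key: "8 * z p * R^2 - (z p + R)^3 = (R - z p) * (4 * z p * R + z p ^ 2 - R ^ 2)"
          by (simp add: power2_eq_square power3_eq_cube algebra_simps)
        have R3: "R \<le> 3 * z p" using nu_le nuR True by simp
        have "(R - z p) * (4 * z p * R + z p ^ 2 - R ^ 2) \<ge> 0"
        proof (rule mult_nonneg_nonneg)
          show "R - z p \<ge> 0" using zR by simp
          have "R * R \<le> (3 * z p) * R" using R3 R0 by (intro mult_right_mono) auto
          moreover have "0 \<le> z p * R + z p * z p" using zp0 R0 by simp
          ultimately show "4 * z p * R + z p ^ 2 - R ^ 2 \<ge> 0"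
            by (simp add: power2_eq_square algebra_simps)
        qed
        then have "(z p + R)^3 \<le> 8 * z p * R^2" using key by simp
        then show ?thesis using True nuR by (simp add: numeral_3_eq_3 numeral_2_eq_2 power2_eq_square power3_eq_cube field_simps)
      next
        case False
        then have d3: "d \<ge> 3" using \<open>d \<noteq> 1\<close> d1 by simp
        have Cst: "Cm (Suc (Suc d)) = Cm (Suc d) / (real (Suc (Suc d)) * 2 ^ d)"
          using Cm_step[of "Suc d"] d3 by simp
        have zlow: "z p \<ge> nu / real (Suc (Suc d))" using nu_le by (simp add: divide_le_eq mult.commute)
        have Rlow: "R \<ge> nu / 2" using zR nuR by simp
        have nu0: "nu \<ge> 0" using nuR zp0 R0 by simp
        have "Cm (Suc (Suc d)) * nu ^ Suc d = (nu / real (Suc (Suc d))) * (Cm (Suc d) * (nu / 2) ^ d)"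
          unfolding Cst by (simp add: field_simps power_divide)
        also have "\<dots> \<le> z p * (Cm (Suc d) * R ^ d)"
        proof (rule mult_mono)
          show "nu / real (Suc (Suc d)) \<le> z p" by (rule zlow)
          show "Cm (Suc d) * (nu / 2) ^ d \<le> Cm (Suc d) * R ^ d"
            using Rlow nu0 Cm_pos[of "Suc d"] by (intro mult_left_mono power_mono) auto
        qed (use zp0 Cm_pos[of "Suc d"] R0 nu0 in auto)
        finally show ?thesis .
      qed
    qed
    also have "z p * (Cm (Suc d) * R ^ d) \<le> z p * (\<Prod>i=Suc p..q-1. z i)"
      using IH zp0 by (intro mult_left_mono) auto
    finally show ?thesis using prodeq unfolding nu_def by simp
  qed
qed



lemma A_Suc_eq: "A (Suc j) = A j ^ 2 / (1 + A j)" by (rule A_Suc)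

lemma Phi2: "A (j + 2 - 2)^2 \<le> 2 * Cm 2 * A j ^ 2" by (simp add: numeral_2_eq_2)

lemma Phi3: assumes "j \<ge> 1" shows "A (j + 3 - 2)^2 \<le> 2 * Cm 3 * A j ^ 3"
proof -
  define a where "a = A j"
  have a0: "a > 0" and ah: "a \<le> 1/2" using A_pos A_le_half[OF assms] by (auto simp: a_def)
  have e: "A (j + 3 - 2) = a^2 / (1 + a)" using A_Suc[of j] by (simp add: a_def numeral_3_eq_3)
  have "(2*a - 1) * (a - 2) \<ge> 0" using ah by (intro mult_nonpos_nonpos) auto
  then have k: "9 * a \<le> 2 * (1 + a)^2" by (simp add: power2_eq_square algebra_simps)
  have "(a^2/(1+a))^2 = a^4 / (1+a)^2" by (simp add: power_divide power2_eq_square power4_eq_xxxx)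
  also have "\<dots> \<le> 2 / 9 * a ^ 3"
  proof -
    have "a^3 * (9 * a) \<le> a^3 * (2 * (1 + a)^2)" using k a0 by (intro mult_left_mono) auto
    then have "9 * a^4 \<le> 2 * a^3 * (1+a)^2" by (simp add: power3_eq_cube power4_eq_xxxx algebra_simps)
    moreover have "(1+a)^2 > 0" using a0 by simp
    ultimately show ?thesis by (simp add: divide_le_eq algebra_simps)
  qed
  finally show ?thesis using e by (simp add: numeral_3_eq_3 a_def)
qed

lemma Cm4: "Cm 4 = 1/72" by (simp add: numeral_eq_Suc)

lemma Phi4: "A (j + 4 - 2)^2 \<le> 2 * Cm 4 * A j ^ 4"
proof (cases "j = 0")
  case True
  then have "j + 4 - 2 = 2" by simp
  then show ?thesis using True by (simp add: A_2 Cm4 power2_eq_square)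
next
  case False
  define a where "a = A j"
  have a0: "a > 0" and ah: "a \<le> 1/2" using A_pos A_le_half[of j] False by (auto simp: a_def)
  have e: "j + 4 - 2 = Suc (Suc j)" by simp
  have b1: "A (Suc (Suc j)) \<le> A (Suc j) ^ 2" by (rule A_Suc_le_sq)
  have b2: "A (Suc j) = a^2/(1+a)" using A_Suc[of j] by (simp add: a_def)
  have b3: "(a^2/(1+a))^2 \<le> a^2 / 6"
  proof -
    have "6 * a^2 \<le> (1+a)^2"
    proof -
      have h: "a * a \<le> a * (1/2)" using ah a0 by (intro mult_left_mono) auto
      have e1: "6 * a^2 = 6*(a*a)" by (simp add: power2_eq_square)
      have e2: "(1+a)^2 = 1 + 2*a + a*a" by (simp add: power2_eq_square algebra_simps)
      show ?thesis unfolding e1 e2 using h ah a0 by linarith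
    qed
    then have "a^2 * (6 * a^2) \<le> a^2 * (1+a)^2" by (intro mult_left_mono) auto
    moreover have "(1+a)^2 > 0" using a0 by simp
    ultimately show ?thesis by (simp add: power_divide divide_le_eq algebra_simps power2_eq_square)
  qed
  have "A (Suc (Suc j)) \<le> a^2/6" using b1 b2 b3 by simp
  moreover have "A (Suc (Suc j)) \<ge> 0" using A_pos less_imp_le by blast
  ultimately have "A (Suc (Suc j))^2 \<le> (a^2/6)^2" by (intro power_mono) auto
  then show ?thesis unfolding e by (simp add: a_def power_divide power2_eq_square power4_eq_xxxx Cm4 algebra_simps)
qed

lemma Cm5: "Cm 5 = 1/2880"
  by (simp add: numeral_eq_Suc)

lemma Phi5: "A (j + 5 - 2)^2 \<le> 2 * Cm 5 * A j ^ 5"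
proof (cases "j = 0")
  case True
  then have "j + 5 - 2 = 3" by simp
  then show ?thesis using True by (simp add: A_3 Cm5 power2_eq_square)
next
  case False
  define a where "a = A j"
  have a0: "a > 0" using A_pos by (simp add: a_def)
  have e: "j + 5 - 2 = Suc (j + 2)" by simp
  have e4: "j + 4 - 2 = j + 2" by simp
  have p4: "A (j+2)^2 \<le> a^4 / 36" using Phi4[of j] unfolding e4 Cm4 by (simp add: a_def)
  have s1: "A (j+2) \<le> a / 6" using A_submult[of j 2] A_2 by (simp add: a_def)
  have s2: "A (j+2) \<le> 1/42" using A_mono[of 3 "j+2"] False A_3 by simp
  have B0: "A (j+2) \<ge> 0" using A_pos less_imp_le by blast
  have s3: "A (j+2)^2 \<le> a / 252"
  proof -
    have "A (j+2) * A (j+2) \<le> (a/6) * (1/42)" using s1 s2 B0 by (intro mult_mono) auto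
    then show ?thesis by (simp add: power2_eq_square)
  qed
  have "A (Suc (j+2)) \<le> A (j+2)^2" by (rule A_Suc_le_sq)
  then have "A (Suc (j+2))^2 \<le> (A (j+2)^2)^2" using A_pos[of "Suc (j+2)"] by (intro power_mono) auto
  also have "\<dots> = A (j+2)^2 * A (j+2)^2" by (simp add: power2_eq_square)
  also have "\<dots> \<le> (a^4/36) * (a/252)" using p4 s3 by (intro mult_mono) auto
  also have "\<dots> \<le> 2 * Cm 5 * a ^ 5" using a0 by (simp add: Cm5 power_eq_if)
  finally show ?thesis unfolding e a_def .
qed

lemma Qbig: "m \<ge> 5 \<Longrightarrow> (m+1) * 2^(m-1) \<le> Q (m-2) ^ 2"
proof (induction m rule: dec_induct)
  case base then show ?case by (simp add: Q_3)
next
  case (step m)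
  have "(Suc m + 1) * 2 ^ (Suc m - 1) = 2 * (m + 2) * 2^(m-1)"
    using step by (cases m) auto
  also have "\<dots> \<le> 4 * ((m+1) * 2^(m-1))" by simp
  also have "\<dots> \<le> 4 * Q (m-2)^2" using step by simp
  also have "\<dots> \<le> Q (Suc m - 2) ^ 2"
  proof -
    have e: "Suc m - 2 = Suc (m - 2)" using step by simp
    have "2 * Q (m-2) \<le> Q (m-2) * (Q (m-2) + 1)" using Q_pos[of "m-2"] by simp
    then have "(2 * Q (m-2))^2 \<le> Q (Suc (m-2))^2" unfolding Q_Suc' by (intro power_mono) auto
    then show ?thesis unfolding e by (simp add: power_mult_distrib)
  qed
  finally show ?case .
qed

lemma PhiGen: assumes "m \<ge> 5" shows "A (j + m - 2)^2 \<le> 2 * Cm m * A j ^ m"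
  using assms
proof (induction m rule: dec_induct)
  case base then show ?case by (rule Phi5)
next
  case (step m)
  define B where "B = A (j + m - 2)"
  define a where "a = A j"
  have a0: "a > 0" using A_pos by (simp add: a_def)
  have B0: "B > 0" using A_pos by (simp add: B_def)
  have e: "j + Suc m - 2 = Suc (j + m - 2)" using step by simp
  have c1: "A (j + Suc m - 2) \<le> B^2" unfolding e B_def by (rule A_Suc_le_sq)
  have c2: "B \<le> a * A (m-2)" using A_submult[of j "m-2"] step by (simp add: B_def a_def)
  have c3: "B \<le> A (m-2)" using A_mono[of "m-2" "j+m-2"] by (simp add: B_def)
  have c4: "A (m-2)^2 \<le> 1 / (real (Suc m) * 2^(m-1))"
  proof -
    have "real ((m+1) * 2^(m-1)) \<le> real (Q (m-2) ^ 2)" using Qbig[of m] step by linarith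
    then have q: "real (Suc m) * 2^(m-1) \<le> real (Q (m-2))^2" by (simp add: algebra_simps)
    have "real (Suc m) * 2^(m-1) > 0" by simp
    then show ?thesis using q Q_pos[of "m-2"] unfolding A_def by (simp add: power_divide frac_le)
  qed
  have "A (j + Suc m - 2)^2 \<le> (B^2)^2" using c1 A_pos[of "j + Suc m - 2"] by (intro power_mono) auto
  also have "\<dots> = B^2 * (B * B)" by (simp add: power2_eq_square)
  also have "\<dots> \<le> (2 * Cm m * a ^ m) * (a * A (m-2) * A (m-2))"
    using step.IH c2 c3 B0 a0 Cm_pos[of m] by (intro mult_mono) (auto simp: a_def B_def)
  also have "\<dots> = (2 * Cm m * a ^ m) * a * A (m-2)^2" by (simp add: power2_eq_square algebra_simps)
  also have "\<dots> \<le> (2 * Cm m * a ^ m) * a * (1 / (real (Suc m) * 2^(m-1)))"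
    using c4 a0 Cm_pos[of m] by (intro mult_left_mono) auto
  also have "\<dots> = 2 * Cm (Suc m) * a ^ Suc m"
    using Cm_step[of m] step by simp
  finally show ?case by (simp add: a_def)
qed

lemma PhiAll: assumes "m \<ge> 2" "\<not> (m = 3 \<and> j = 0)"
  shows "A (j + m - 2)^2 \<le> 2 * Cm m * A j ^ m"
proof -
  consider "m = 2" | "m = 3" | "m = 4" | "m \<ge> 5" using assms(1) by linarith
  then show ?thesis
  proof cases
    case 1 then show ?thesis using Phi2 by simp
  next
    case 2 then show ?thesis using Phi3[of j] assms(2) by simp
  next
    case 3 then show ?thesis using Phi4 by simp
  next
    case 4 then show ?thesis by (rule PhiGen)
  qed
qed



lemma E_bound:
  assumes y: "y \<in> Xset n" and n: "n \<ge> 4" and a: "1 \<le> a" "a \<le> n - 1"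
  shows "(\<Prod>i=a..n-1. y i) \<ge> A (n-2)^2 / (2 * A (a-1))"
proof -
  define T where "T j = (\<Sum>i=Suc j..n. y i)" for j
  define K where "K = {k. k \<le> n-2 \<and> (k = 0 \<or> T k \<le> y k)}"
  have finK: "finite K" unfolding K_def by auto
  have K0: "0 \<in> K" unfolding K_def by auto
  define k where "k = Max K"
  have kK: "k \<in> K" unfolding k_def using finK K0 by (intro Max_in) auto
  have kn: "k \<le> n - 2" using kK unfolding K_def by auto
  have bal: "y j < T j" if "k < j" "j \<le> n - 2" for j
  proof -
    have "j \<notin> K" using that Max_ge[OF finK, of j] unfolding k_def by auto
    then show ?thesis using that unfolding K_def by auto
  qed
  have ypos: "y i > 0" if "1 \<le> i" "i \<le> n" for i using X_pos[OF y that] .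
  have Apos: "\<And>j. A j > 0" by (rule A_pos)
  have Tpos: "T j \<ge> A j" if "j < n" for j unfolding T_def using L_lemma[OF y that] .
  have tail: "(\<Prod>i=p..n-1. y i) \<ge> Cm (Suc (n - p)) * T (p - 1) ^ (n - p)"
    if p: "k < p" "1 \<le> p" "p \<le> n - 1" for p
  proof -
    have "(\<Prod>i=p..n-1. y i) \<ge> Cm (Suc (n - p)) * (\<Sum>i=p..n. y i) ^ (n - p)"
    proof (rule tail_lemma[where q = n and d = "n - p"])
      show "n = p + (n - p)" using p by simp
      show "1 \<le> n - p" using p by simp
      show "y (Suc i) \<le> y i" if "p \<le> i" "i < n" for i using X_step[OF y, of i] that p by simp
      show "0 \<le> y i" if "p \<le> i" "i \<le> n" for i using ypos[of i] that p by simp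
      show "y j < (\<Sum>i=Suc j..n. y i)" if "p \<le> j" "j + 2 \<le> n" for j
        using bal[of j] that p unfolding T_def by simp
    qed
    moreover have "(\<Sum>i=p..n. y i) = T (p - 1)" unfolding T_def using p by simp
    ultimately show ?thesis by simp
  qed
  show ?thesis
  proof (cases "a \<le> k")
    case True
    then have k1: "1 \<le> k" using a by simp
    have Tk: "T k \<le> y k" using kK k1 unfolding K_def by auto
    define m where "m = n - k"
    have m2: "m \<ge> 2" using kn n unfolding m_def by simp
    have CB: "(\<Prod>i=a..k. y i) * T k \<ge> A k ^ 2 / A (a - 1)"
      unfolding T_def by (rule collapse_bound[OF y a(1) _ k1]) (use True kn n Tk in \<open>auto simp: T_def\<close>)
    have TL: "(\<Prod>i=Suc k..n-1. y i) \<ge> Cm m * T k ^ (m - 1)"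
      using tail[of "Suc k"] kn n unfolding m_def by (simp add: Suc_diff_Suc)
    have split: "(\<Prod>i=a..n-1. y i) = (\<Prod>i=a..k. y i) * (\<Prod>i=Suc k..n-1. y i)"
      by (rule prod_split) (use True kn n in auto)
    define P1 where "P1 = (\<Prod>i=a..k. y i)"
    have P1pos: "P1 > 0" unfolding P1_def by (rule prod_pos) (use ypos a kn n in auto)
    have TkA: "T k \<ge> A k" using Tpos[of k] kn n by simp
    have Tk0: "T k > 0" using TkA Apos[of k] by linarith
    have f1: "(\<Prod>i=a..n-1. y i) \<ge> P1 * (Cm m * T k ^ (m - 1))"
      unfolding split P1_def using TL P1pos unfolding P1_def by (intro mult_left_mono) auto
    have f2: "P1 * (Cm m * T k ^ (m - 1)) = (P1 * T k) * (Cm m * T k ^ (m - 2))"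
    proof -
      have "T k ^ (m - 1) = T k * T k ^ (m - 2)" using m2 by (metis Suc_diff_Suc Suc_1 Suc_le_lessD power_Suc diff_Suc_1)
      then show ?thesis by simp
    qed
    have f3: "(P1 * T k) * (Cm m * T k ^ (m - 2)) \<ge> (A k ^ 2 / A (a - 1)) * (Cm m * A k ^ (m - 2))"
      using CB TkA Cm_pos[of m] Apos[of k] Apos[of "a-1"] P1pos Tk0 unfolding P1_def
      by (intro mult_mono mult_left_mono power_mono) auto
    have f4: "(A k ^ 2 / A (a - 1)) * (Cm m * A k ^ (m - 2)) = (Cm m * A k ^ m) / A (a - 1)"
    proof -
      have "A k ^ 2 * A k ^ (m - 2) = A k ^ (2 + (m - 2))" by (simp only: power_add)
      also have "2 + (m - 2) = m" using m2 by simp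
      finally have "A k ^ 2 * A k ^ (m - 2) = A k ^ m" .
      then show ?thesis by (simp add: field_simps)
    qed
    have f5: "A (n - 2)^2 \<le> 2 * Cm m * A k ^ m"
    proof -
      have "A (k + m - 2)^2 \<le> 2 * Cm m * A k ^ m" by (rule PhiAll) (use m2 k1 in auto)
      moreover have "k + m - 2 = n - 2" unfolding m_def using kn n by simp
      ultimately show ?thesis by simp
    qed
    have f6: "A (n - 2)^2 / (2 * A (a - 1)) \<le> (Cm m * A k ^ m) / A (a - 1)"
    proof -
      have "A (n - 2)^2 / (2 * A (a - 1)) \<le> (2 * Cm m * A k ^ m) / (2 * A (a - 1))"
        using f5 Apos[of "a-1"] by (intro divide_right_mono) auto
      also have "\<dots> = (Cm m * A k ^ m) / A (a - 1)" by simp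
      finally show ?thesis .
    qed
    show ?thesis using f1 f2 f3 f4 f6 by linarith
  next
    case False
    define m where "m = Suc (n - a)"
    have m2: "m \<ge> 2" using a n unfolding m_def by simp
    have TL: "(\<Prod>i=a..n-1. y i) \<ge> Cm m * T (a - 1) ^ (m - 1)"
      using tail[of a] False a unfolding m_def by simp
    have TA: "T (a - 1) \<ge> A (a - 1)" using Tpos[of "a-1"] a n by simp
    have "Cm m * T (a - 1) ^ (m - 1) \<ge> Cm m * A (a - 1) ^ (m - 1)"
      using TA Apos[of "a-1"] Cm_pos[of m] by (intro mult_left_mono power_mono) auto
    moreover have "Cm m * A (a - 1) ^ (m - 1) = Cm m * A (a - 1) ^ m / A (a - 1)"
    proof -
      have "A (a - 1) ^ m = A (a-1) * A (a - 1) ^ (m - 1)" using m2 by (metis Suc_diff_1 less_le_trans pos2 power_Suc)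
      then show ?thesis using Apos[of "a-1"] by simp
    qed
    moreover have "A (n - 2)^2 \<le> 2 * Cm m * A (a - 1) ^ m"
    proof -
      have "\<not> (m = 3 \<and> a - 1 = 0)" using n a unfolding m_def by auto
      then have "A (a - 1 + m - 2)^2 \<le> 2 * Cm m * A (a - 1) ^ m" using PhiAll m2 by blast
      moreover have "a - 1 + m - 2 = n - 2" unfolding m_def using a n by simp
      ultimately show ?thesis by simp
    qed
    ultimately have g: "Cm m * T (a - 1) ^ (m - 1) \<ge> Cm m * A (a - 1) ^ m / A (a - 1)"
      and f5: "A (n - 2)^2 \<le> 2 * Cm m * A (a - 1) ^ m" by auto
    have f6: "A (n - 2)^2 / (2 * A (a - 1)) \<le> (Cm m * A (a - 1) ^ m) / A (a - 1)"
    proof -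
      have "A (n - 2)^2 / (2 * A (a - 1)) \<le> (2 * Cm m * A (a - 1) ^ m) / (2 * A (a - 1))"
        using f5 Apos[of "a-1"] by (intro divide_right_mono) auto
      also have "\<dots> = (Cm m * A (a - 1) ^ m) / A (a - 1)" by simp
      finally show ?thesis .
    qed
    show ?thesis using TL g f6 by linarith
  qed
qed



lemma Cm_lt: assumes "m \<ge> 4" shows "Cm m * real m ^ (m - 1) < 1"
  using assms
proof (induction m rule: dec_induct)
  case base then show ?case by (simp add: Cm4)
next
  case (step m)
  have "Cm (Suc m) * real (Suc m) ^ (Suc m - 1) = Cm m * (real (Suc m) ^ m / (real (Suc m) * 2 ^ (m - 1)))"
    using Cm_step[of m] step by simp
  also have "real (Suc m) ^ m / (real (Suc m) * 2 ^ (m - 1)) = real (Suc m) ^ (m - 1) / 2 ^ (m - 1)"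
  proof -
    have "real (Suc m) ^ m = real (Suc m) * real (Suc m) ^ (m - 1)" using step
      by (metis Suc_diff_1 less_le_trans numeral_less_iff power_Suc semiring_norm(76) zero_less_numeral)
    then show ?thesis by simp
  qed
  also have "\<dots> = (real (Suc m) / 2) ^ (m - 1)" by (simp add: power_divide)
  also have "\<dots> \<le> real m ^ (m - 1)" using step by (intro power_mono) auto
  finally have "Cm (Suc m) * real (Suc m) ^ (Suc m - 1) \<le> Cm m * real m ^ (m - 1)"
    using Cm_pos[of m] by (simp add: mult_left_mono)
  then show ?case using step by simp
qed

lemma strict3: assumes "j \<ge> 2" shows "A (j + 3 - 2)^2 < 2 * A j ^ 3 / 9"
proof -
  define a where "a = A j"
  have a0: "a > 0" using A_pos by (simp add: a_def)
  have ah: "a \<le> 1/6" using A_mono[of 2 j] assms A_2 by (simp add: a_def)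
  have e: "A (j + 3 - 2) = a^2 / (1 + a)" using A_Suc[of j] by (simp add: a_def numeral_3_eq_3)
  have "(1 - 2*a) * (2 - a) > 0" using ah by (intro mult_pos_pos) auto
  then have k: "9 * a < 2 * (1 + a)^2" by (simp add: power2_eq_square algebra_simps)
  have "(a^2/(1+a))^2 = a^4 / (1+a)^2" by (simp add: power_divide power2_eq_square power4_eq_xxxx)
  also have "\<dots> < 2 * a ^ 3 / 9"
  proof -
    have "a^3 * (9 * a) < a^3 * (2 * (1 + a)^2)" using k a0 by (intro mult_strict_left_mono) auto
    then have "9 * a^4 < 2 * a^3 * (1+a)^2" by (simp add: power3_eq_cube power4_eq_xxxx algebra_simps)
    moreover have "(1+a)^2 > 0" using a0 by simp
    ultimately show ?thesis by (simp add: divide_less_eq algebra_simps)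
  qed
  finally show ?thesis using e by (simp add: a_def)
qed

lemma strictE: assumes "m \<ge> 4" shows "A (j + m - 2)^2 < 2 * A j ^ m / real m ^ (m - 1)"
proof -
  have "A (j + m - 2)^2 \<le> 2 * Cm m * A j ^ m" using PhiAll[of m j] assms by simp
  also have "\<dots> < 2 * A j ^ m / real m ^ (m - 1)"
  proof -
    have mp: "real m ^ (m - 1) > 0" using assms by simp
    have "Cm m < 1 / real m ^ (m - 1)" using Cm_lt[OF assms] mp by (simp add: less_divide_eq)
    moreover have "2 * A j ^ m > 0" using A_pos[of j] by simp
    ultimately have "(2 * A j ^ m) * Cm m < (2 * A j ^ m) * (1 / real m ^ (m - 1))"
      by (intro mult_strict_left_mono) auto
    then show ?thesis by (simp add: algebra_simps)
  qed
  finally show ?thesis .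
qed

lemma Psi: assumes "m \<ge> 2" "j + m \<ge> 4" "m \<le> 3 \<Longrightarrow> j \<ge> 1"
  shows "A (j + m - 1)^2 < A j ^ (m + 1) / real m ^ m"
proof -
  define a where "a = A j"
  have a0: "a > 0" using A_pos by (simp add: a_def)
  have a1: "a \<le> 1" using A_le1 by (simp add: a_def)
  consider "m = 2" | "m = 3" | "m \<ge> 4" using assms(1) by linarith
  then show ?thesis
  proof cases
    case 1
    then have j1: "j \<ge> 1" using assms by simp
    have ah: "a \<le> 1/2" using A_le_half[OF j1] by (simp add: a_def)
    have e: "A (j + m - 1) = a^2/(1+a)" using 1 A_Suc[of j] by (simp add: a_def)
    have "(1 - a)^2 > 0" using ah by simp
    then have k: "4 * a < (1 + a)^2" by (simp add: power2_eq_square algebra_simps)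
    have "(a^2/(1+a))^2 = a^4 / (1+a)^2" by (simp add: power_divide power2_eq_square power4_eq_xxxx)
    also have "\<dots> < a ^ 3 / 4"
    proof -
      have "a^3 * (4 * a) < a^3 * (1 + a)^2" using k a0 by (intro mult_strict_left_mono) auto
      then have "4 * a^4 < a^3 * (1+a)^2" by (simp add: power3_eq_cube power4_eq_xxxx algebra_simps)
      moreover have "(1+a)^2 > 0" using a0 by simp
      ultimately show ?thesis by (simp add: divide_less_eq algebra_simps)
    qed
    finally show ?thesis using e 1 by (simp add: a_def)
  next
    case 2
    then have j1: "j \<ge> 1" using assms by simp
    have ah: "a \<le> 1/2" using A_le_half[OF j1] by (simp add: a_def)
    have e: "j + m - 1 = Suc (Suc j)" using 2 by simp
    have b1: "A (Suc (Suc j)) \<le> A (Suc j)^2" by (rule A_Suc_le_sq)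
    have b2: "A (Suc j) = a^2/(1+a)" using A_Suc[of j] by (simp add: a_def)
    have b3: "A (Suc (Suc j)) \<le> a^4/(1+a)^2" using b1 b2 by (simp add: power_divide power2_eq_square power4_eq_xxxx)
    have "A (Suc (Suc j))^2 \<le> (a^4/(1+a)^2)^2" using b3 A_pos[of "Suc (Suc j)"] by (intro power_mono) auto
    also have "\<dots> < a^4 / 27"
    proof -
      have h3: "3 * a \<le> 1 + a" using ah by simp
      have "(3*a)^4 \<le> (1+a)^4" using h3 a0 by (intro power_mono) auto
      then have "81 * a^4 \<le> (1+a)^4" by (simp add: power_mult_distrib)
      moreover have "27 * a^4 < 81 * a^4" using a0 by simp
      ultimately have k: "27 * a^4 < (1+a)^4" by linarith
      have "(a^4/(1+a)^2)^2 = a^4 * a^4 / (1+a)^4" by (simp add: power_divide power2_eq_square power4_eq_xxxx)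
      also have "\<dots> < a^4 / 27"
      proof -
        have "a^4 * (27 * a^4) < a^4 * (1+a)^4" using k a0 by (intro mult_strict_left_mono) auto
        moreover have "(1+a)^4 > 0" using a0 by simp
        ultimately show ?thesis by (simp add: divide_less_eq algebra_simps)
      qed
      finally show ?thesis .
    qed
    finally show ?thesis using 2 e by (simp add: a_def)
  next
    case 3
    have e: "j + m - 1 = Suc (j + m - 2)" using 3 by simp
    have p: "A (j + m - 2)^2 \<le> 2 * Cm m * a ^ m" using PhiAll[of m j] 3 by (simp add: a_def)
    have cl: "Cm m * real m ^ (m - 1) < 1" by (rule Cm_lt[OF 3])
    have "A (j + m - 1) \<le> A (j + m - 2)^2" unfolding e by (rule A_Suc_le_sq)
    then have "A (j + m - 1)^2 \<le> (2 * Cm m * a ^ m)^2"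
      using p A_pos[of "j + m - 1"] by (meson less_imp_le order_trans power_mono)
    also have "\<dots> = 4 * Cm m ^ 2 * a ^ m * a ^ m" by (simp add: power2_eq_square)
    also have "\<dots> \<le> 4 * Cm m ^ 2 * a ^ m * a"
    proof -
      have "a ^ m \<le> a" using a0 a1 3 by (simp add: power_le_one_iff power_decreasing[of 1 m a, simplified])
      then show ?thesis using a0 Cm_pos[of m] by (intro mult_left_mono) auto
    qed
    also have "\<dots> < a ^ (m + 1) / real m ^ m"
    proof -
      have mp: "real m ^ m > 0" using 3 by simp
      have mm: "real m ^ m = real m * real m ^ (m - 1)" using 3
        by (metis Suc_diff_1 less_le_trans numeral_less_iff power_Suc semiring_norm(76) zero_less_numeral)
      have "4 * Cm m ^ 2 * real m ^ m = (Cm m * real m ^ (m - 1))^2 * (4 * real m / real m ^ (m - 1))"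
      proof -
        have "real m ^ (m - 1) > 0" using 3 by simp
        then show ?thesis unfolding mm by (simp add: power2_eq_square field_simps)
      qed
      also have "\<dots> < 1 * 1"
      proof (rule mult_strict_mono')
        show "(Cm m * real m ^ (m - 1))^2 < 1"
          using cl Cm_pos[of m] 3 by (simp add: power_less_one_iff abs_square_less_1)
        have "real m ^ (m - 1) \<ge> real m ^ 3"
          using 3 by (intro power_increasing) auto
        moreover have "real m ^ 3 \<ge> real m * 16"
        proof -
          have "real m * real m \<ge> 4 * 4" using 3 by (intro mult_mono) auto
          then show ?thesis using 3 by (simp add: power3_eq_cube mult_left_mono[of 16 "real m * real m" "real m", simplified] algebra_simps)
        qed
        ultimately have "real m ^ (m - 1) \<ge> real m * 16" by linarith
        then show "4 * real m / real m ^ (m - 1) < 1" using 3 by (simp add: divide_less_eq)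
      qed (use 3 in auto)
      finally have k: "4 * Cm m ^ 2 * real m ^ m < 1" by simp
      have "4 * Cm m ^ 2 * a ^ m * a = (4 * Cm m ^ 2 * real m ^ m) * (a ^ (m+1) / real m ^ m)"
        using mp by (simp add: field_simps)
      also have "\<dots> < 1 * (a ^ (m+1) / real m ^ m)"
        using k a0 mp by (intro mult_strict_right_mono) auto
      finally show ?thesis by simp
    qed
    finally show ?thesis by (simp add: a_def)
  qed
qed



lemma obj_mid: assumes "1 \<le> a" "a \<le> l" "l \<le> Suc b" "b \<le> n" "l \<le> n"
  shows "obj a b (xbar n l) = (A (l - 1) / A (a - 1)) * cc n l ^ (Suc b - l)"
proof -
  have "obj a b (xbar n l) = (\<Prod>i=a..l-1. xbar n l i) * (\<Prod>i=Suc (l-1)..b. xbar n l i)"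
    unfolding obj_def by (rule prod_split) (use assms in auto)
  also have "(\<Prod>i=a..l-1. xbar n l i) = (\<Prod>i=Suc (a-1)..l-1. xbar n l i)" using assms by simp
  also have "\<dots> = A (l - 1) / A (a - 1)" by (rule xbar_prod_lo) (use assms in auto)
  also have "(\<Prod>i=Suc (l-1)..b. xbar n l i) = cc n l ^ (Suc b - l)"
    using xbar_prod_hi[of l l b n] assms by simp
  finally show ?thesis .
qed

lemma obj_low: assumes "1 \<le> l" "l \<le> a" "a \<le> b" "b \<le> n"
  shows "obj a b (xbar n l) = cc n l ^ (Suc b - a)"
  unfolding obj_def using xbar_prod_hi[of l a b n] assms by simp

lemma obj_high: assumes "1 \<le> a" "a \<le> b" "b < l" "l \<le> n"
  shows "obj a b (xbar n l) = A b / A (a - 1)"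
proof -
  have "obj a b (xbar n l) = (\<Prod>i=Suc (a-1)..b. xbar n l i)" unfolding obj_def using assms by simp
  also have "\<dots> = A b / A (a - 1)" by (rule xbar_prod_lo) (use assms in auto)
  finally show ?thesis .
qed

lemma A_div_sylv: "1 \<le> l \<Longrightarrow> A l = A (l - 1) / real (sylv l)"
  using Q_Suc[of "l-1"] Q_pos[of "l-1"] sylv_ge2[of l] unfolding A_def by (cases l) (auto simp: field_simps)

lemma cc_step: assumes "1 \<le> l" "Suc l \<le> n" "n \<ge> 3" shows "cc n (Suc l) < cc n l"
proof -
  define N where "N = real (n - l + 1)"
  define sv where "sv = real (sylv l)"
  have N2: "N \<ge> 2" using assms by (simp add: N_def)
  have sv2: "sv \<ge> 2" using sylv_ge2[OF assms(1)] by (simp add: sv_def)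
  have big: "sv * (N - 1) > N"
  proof (cases "l = 1")
    case True
    then have "sv = 2" by (simp add: sv_def sylv_Suc_Q)
    moreover have "N \<ge> 3" using assms True by (simp add: N_def)
    ultimately show ?thesis by simp
  next
    case False
    then have "l \<ge> 2" using assms by simp
    then have "sylv l \<ge> sylv 2" using sylv_mono by simp
    moreover have "sylv 2 = 3" using sylv_Suc_Q[of 1] Q_1 by (simp add: numeral_2_eq_2)
    ultimately have "sv \<ge> 3" by (simp add: sv_def)
    then have "sv * (N - 1) \<ge> 3 * (N - 1)" using N2 by (intro mult_right_mono) auto
    then show ?thesis using N2 by simp
  qed
  have e1: "cc n (Suc l) = A (l - 1) / (sv * (N - 1))"
    unfolding cc_def A_div_sylv[OF assms(1), symmetric] using assms A_div_sylv[OF assms(1)]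
    by (simp add: N_def sv_def Suc_diff_Suc of_nat_diff field_simps)
  have e2: "cc n l = A (l - 1) / N" by (simp add: cc_def N_def)
  show ?thesis unfolding e1 e2 using big A_pos[of "l-1"] N2
    by (intro divide_strict_left_mono) auto
qed

lemma cc_strict: assumes "1 \<le> l" "l < l'" "l' \<le> n" "n \<ge> 3" shows "cc n l' < cc n l"
proof -
  have "cc n l' < cc n l" if "Suc l \<le> l'" "l' \<le> n" for l'
    using that
  proof (induction l' rule: dec_induct)
    case base then show ?case using cc_step assms by simp
  next
    case (step k)
    then have "cc n (Suc k) < cc n k" using cc_step[of k n] assms by simp
    then show ?case using step by simp
  qed
  then show ?thesis using assms by simp
qed

lemma pow_e: assumes D: "D > 0" and r: "real r \<le> D" shows "((D + 1) / D) ^ r \<le> exp 1"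
proof -
  have "(D + 1) / D = 1 + 1 / D" using D by (simp add: field_simps)
  also have "\<dots> \<le> exp (1 / D)" by (rule exp_ge_add_one_self)
  finally have "((D + 1) / D) ^ r \<le> exp (1 / D) ^ r" using D by (intro power_mono) auto
  also have "\<dots> = exp (real r * (1 / D))" by (rule exp_of_nat_mult[symmetric])
  also have "\<dots> \<le> exp 1" using r D by (simp add: divide_le_eq)
  finally show ?thesis .
qed

lemma b_step: assumes l: "1 \<le> l" "a \<le> l" "1 \<le> a" and lb: "l < b" and bn: "b \<le> n"
  and s: "real (sylv l) > exp 1 * real n"
  shows "obj a b (xbar n (Suc l)) < obj a b (xbar n l)"
proof -
  define \<alpha> where "\<alpha> = A (l - 1)"
  define sv where "sv = real (sylv l)"
  define D where "D = real (n - l)"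
  define r where "r = b - l"
  have \<alpha>0: "\<alpha> > 0" using A_pos by (simp add: \<alpha>_def)
  have sv2: "sv \<ge> 2" using sylv_ge2[OF l(1)] by (simp add: sv_def)
  have D0: "D > 0" using lb bn by (simp add: D_def)
  have r1: "r \<ge> 1" using lb by (simp add: r_def)
  have rD: "real r \<le> D" using bn by (simp add: r_def D_def)
  have o1: "obj a b (xbar n (Suc l)) = (A l / A (a - 1)) * cc n (Suc l) ^ r"
    using obj_mid[of a "Suc l" b n] l lb bn by (simp add: r_def)
  have o2: "obj a b (xbar n l) = (\<alpha> / A (a - 1)) * cc n l ^ (Suc r)"
    using obj_mid[of a l b n] l lb bn by (simp add: r_def \<alpha>_def Suc_diff_le)
  have Al: "A l = \<alpha> / sv" using A_div_sylv[OF l(1)] by (simp add: \<alpha>_def sv_def)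
  have c1: "cc n (Suc l) = \<alpha> / (sv * D)" unfolding cc_def using Al lb bn l(1)
    by (simp add: D_def Suc_diff_Suc)
  have c2: "cc n l = \<alpha> / (D + 1)" unfolding cc_def \<alpha>_def D_def using lb bn l(1) by (simp add: Suc_diff_le)
  have key: "(sv - 1) * (D + 1) ^ Suc r < sv ^ Suc r * D ^ r"
  proof -
    have "(D + 1) ^ r = ((D + 1) / D) ^ r * D ^ r" using D0 by (simp add: power_divide)
    also have "\<dots> \<le> exp 1 * D ^ r" using pow_e[OF D0 rD] D0 by (intro mult_right_mono) auto
    finally have h1: "(D + 1) ^ r \<le> exp 1 * D ^ r" .
    have Dn: "D + 1 \<le> real n" using lb bn l(1) by (simp add: D_def)
    have "(D + 1) ^ Suc r = (D + 1) * (D + 1) ^ r" by simp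
    also have "\<dots> \<le> (D + 1) * (exp 1 * D ^ r)" using h1 D0 by (intro mult_left_mono) auto
    also have "\<dots> = (exp 1 * (D + 1)) * D ^ r" by simp
    also have "\<dots> < sv * D ^ r"
    proof (rule mult_strict_right_mono)
      have "exp 1 * (D + 1) \<le> exp 1 * real n" using Dn by simp
      then show "exp 1 * (D + 1) < sv" using s unfolding sv_def by linarith
    qed (use D0 in simp)
    finally have k1: "(D + 1) ^ Suc r < sv * D ^ r" .
    have "(sv - 1) * (D + 1) ^ Suc r < (sv - 1) * (sv * D ^ r)"
      using k1 sv2 by (intro mult_strict_left_mono) auto
    also have "\<dots> \<le> sv ^ r * (sv * D ^ r)"
    proof (rule mult_right_mono)
      have "sv ^ 1 \<le> sv ^ r" using sv2 r1 by (intro power_increasing) auto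
      then show "sv - 1 \<le> sv ^ r" by simp
    qed (use sv2 D0 in simp)
    also have "\<dots> = sv ^ Suc r * D ^ r" by simp
    finally show ?thesis .
  qed
  have Apos': "A (a - 1) > 0" by (rule A_pos)
  have \<alpha>sv: "\<alpha> = 1 / (sv - 1)" unfolding \<alpha>_def sv_def A_def using sylv_minus1[OF l(1)] by simp
  have sv1: "sv - 1 > 0" using sv2 by simp
  have "obj a b (xbar n (Suc l)) = (\<alpha> ^ Suc r / A (a - 1)) * (1 / (sv ^ Suc r * D ^ r))"
    unfolding o1 Al c1 using sv2 D0 by (simp add: power_divide power_mult_distrib field_simps)
  also have "\<dots> < (\<alpha> ^ Suc r / A (a - 1)) * (1 / ((sv - 1) * (D + 1) ^ Suc r))"
  proof (rule mult_strict_left_mono)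
    show "1 / (sv ^ Suc r * D ^ r) < 1 / ((sv - 1) * (D + 1) ^ Suc r)"
      using key D0 sv1 by (intro divide_strict_left_mono) auto
    show "0 < \<alpha> ^ Suc r / A (a - 1)" using \<alpha>0 Apos' by simp
  qed
  also have "\<dots> = (\<alpha> ^ Suc r / A (a - 1)) * (\<alpha> / (D + 1) ^ Suc r)"
    using \<alpha>sv by simp
  also have "\<dots> = obj a b (xbar n l)"
    unfolding o2 c2 using D0 by (simp add: power_divide)
  finally show ?thesis .
qed



lemma sylv_dexp: "l \<ge> 2 \<Longrightarrow> 2 ^ (2 ^ (l - 2)) < sylv l"
proof (induction l rule: dec_induct)
  case base
  have "sylv 2 = 3" using sylv_Suc_Q[of 1] Q_1 by (simp add: numeral_2_eq_2)
  then show ?case by simp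
next
  case (step l)
  define X :: nat where "X = 2 ^ (2 ^ (l - 2))"
  have sl: "sylv l \<ge> X + 1" using step by (simp add: X_def)
  have Ql: "Q l = Q (l - 1) * sylv l" using Q_Suc[of "l-1"] step by simp
  have Qm: "Q (l - 1) = sylv l - 1" using sylv_Suc_Q[of "l-1"] step by simp
  have "X * X \<le> (sylv l - 1) * sylv l" using sl by (intro mult_mono) auto
  then have "X * X < Q l + 1" using Ql Qm by simp
  moreover have "(2::nat) ^ (2 ^ (Suc l - 2)) = X * X"
  proof -
    have "Suc l - 2 = Suc (l - 2)" using step by simp
    then have e: "(2::nat) ^ (Suc l - 2) = 2 ^ (l - 2) * 2" by simp
    have "(2::nat) ^ (2 ^ (l - 2) * 2) = (2 ^ (2 ^ (l - 2))) ^ 2" by (rule power_mult)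
    then show ?thesis unfolding e X_def by (simp add: power2_eq_square)
  qed
  ultimately show ?case by (simp add: sylv_Suc_Q)
qed

lemma log_bound:
  assumes n: "n \<ge> 4" and l: "real l > 2 + log 2 (log 2 (real n) + log 2 (exp 1))"
  shows "l \<ge> 3 \<and> real (sylv l) > exp 1 * real n"
proof -
  define L where "L = log 2 (real n) + log 2 (exp 1)"
  have ln2: "log 2 (real n) \<ge> 2"
  proof -
    have "log 2 (real n) \<ge> log 2 4" using n by simp
    moreover have "log 2 (4::real) = 2"
    proof -
      have "log 2 ((2::real) ^ 2) = real 2" using log_pow_cancel[of "2::real" 2] by simp
      then show ?thesis by simp
    qed
    ultimately show ?thesis by simp
  qed
  have le: "log 2 (exp 1) > 0" by simp
  have L2: "L > 2" unfolding L_def using add_le_less_mono[OF ln2 le] by simp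
  have logL: "log 2 L > 1"
  proof -
    have "log 2 L > log 2 2" using L2 by simp
    then show ?thesis by simp
  qed
  have l3: "l \<ge> 3" using l logL unfolding L_def[symmetric] by linarith
  have "real l - 2 > log 2 L" using l unfolding L_def by simp
  then have "2 powr (log 2 L) < 2 powr (real l - 2)" by (rule powr_less_mono) simp
  moreover have "2 powr (log 2 L) = L" using L2 by (intro powr_log_cancel) auto
  ultimately have p1: "2 powr (real l - 2) > L" by simp
  have e1: "2 powr (real l - 2) = real (2 ^ (l - 2))"
  proof -
    have h1: "real l - 2 = real (l - 2)" using l3 by (simp add: of_nat_diff)
    have h2: "(2::real) powr (real (l - 2)) = 2 ^ (l - 2)" by (rule powr_realpow) simp
    have h3: "real ((2::nat) ^ (l - 2)) = (2::real) ^ (l - 2)" by simp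
    show ?thesis unfolding h1 h2 h3 ..
  qed
  have "2 powr L < 2 powr (real (2 ^ (l - 2)))" using p1 e1 by (intro powr_less_mono) auto
  moreover have "2 powr L = real n * exp 1"
  proof -
    have "L = log 2 (real n * exp 1)" unfolding L_def using n by (simp add: log_mult_pos)
    moreover have "2 powr (log 2 (real n * exp 1)) = real n * exp 1" using n by (intro powr_log_cancel) auto
    ultimately show ?thesis by simp
  qed
  moreover have "2 powr (real (2 ^ (l - 2))) = real (2 ^ (2 ^ (l - 2)) :: nat)"
  proof -
    have "(2::real) powr (real (2 ^ (l - 2))) = 2 ^ (2 ^ (l - 2))" by (rule powr_realpow) simp
    moreover have "real ((2::nat) ^ (2 ^ (l - 2))) = (2::real) ^ (2 ^ (l - 2))" by simp
    ultimately show ?thesis by simp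
  qed
  moreover have "real (2 ^ (2 ^ (l - 2)) :: nat) < real (sylv l)"
    using sylv_dexp[of l] l3 by (simp only: of_nat_less_iff)
  ultimately have "real n * exp 1 < real (sylv l)" by linarith
  then show ?thesis using l3 by (simp add: mult.commute)
qed



lemma minimizer_le: "is_minimizer n a b x \<Longrightarrow> y \<in> Xset n \<Longrightarrow> obj a b x \<le> obj a b y"
  unfolding is_minimizer_def by auto

lemma partA: assumes "1 \<le> b" "b \<le> n" shows "is_minimizer n b b (xbar n b)"
  unfolding is_minimizer_def
proof (intro conjI ballI)
  show "xbar n b \<in> Xset n" using xbar_mem assms by simp
  fix y assume y: "y \<in> Xset n"
  have "obj b b (xbar n b) = cc n b" unfolding obj_def using xbar_hi[of b b n] assms by simp
  also have "\<dots> \<le> y b" using xb_ge[OF y assms] unfolding cc_def .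
  also have "\<dots> = obj b b y" unfolding obj_def by simp
  finally show "obj b b (xbar n b) \<le> obj b b y" .
qed

lemma partB: assumes n: "n \<ge> 4" and a: "1 \<le> a" "a \<le> b" and b: "b < n - 1"
  and l: "1 \<le> l" "l \<le> n" and mn: "is_minimizer n a b (xbar n l)"
  shows "(a \<le> l \<and> real l \<le> 2 + log 2 (log 2 (real n) + log 2 (exp 1))) \<or> l = b"
proof (rule ccontr)
  assume H: "\<not> ?thesis"
  then have lb: "l \<noteq> b" by simp
  have cmp: "obj a b (xbar n l) \<le> obj a b (xbar n l')" if "1 \<le> l'" "l' \<le> n" for l'
    using minimizer_le[OF mn xbar_mem[OF that]] .
  consider "l < a" | "b < l" | "a \<le> l" "l < b" using lb by linarith
  then show False
  proof cases
    case 1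
    have "obj a b (xbar n a) < obj a b (xbar n l)"
    proof -
      have "obj a b (xbar n a) = cc n a ^ (Suc b - a)" using obj_low[of a a b n] a b by simp
      also have "\<dots> < cc n l ^ (Suc b - a)"
        using cc_strict[of l a n] 1 l a b n cc_pos[of n a] by (intro power_strict_mono) auto
      also have "\<dots> = obj a b (xbar n l)" using obj_low[of l a b n] 1 l a b by simp
      finally show ?thesis .
    qed
    moreover have "a \<le> n" using a b by simp
    ultimately show False using cmp[of a] a by simp
  next
    case 2
    have b1: "1 \<le> b" using a by simp
    have "obj a b (xbar n b) < obj a b (xbar n l)"
    proof -
      have "obj a b (xbar n b) = (A (b - 1) / A (a - 1)) * cc n b" using obj_mid[of a b b n] a b by simp
      also have "\<dots> = (A (b - 1) * cc n b) / A (a - 1)" by simp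
      also have "\<dots> < A b / A (a - 1)"
      proof (rule divide_strict_right_mono)
        show "0 < A (a - 1)" by (rule A_pos)
        define \<alpha> where "\<alpha> = A (b - 1)"
        have \<alpha>0: "\<alpha> > 0" and \<alpha>1: "\<alpha> \<le> 1" using A_pos A_le1 by (auto simp: \<alpha>_def)
        have N: "real (n - b + 1) \<ge> 3" using b by simp
        have e1: "A b = \<alpha>^2 / (1 + \<alpha>)" using A_Suc[of "b-1"] b1 by (simp add: \<alpha>_def)
        have e2: "\<alpha> * cc n b = \<alpha>^2 / real (n - b + 1)" by (simp add: cc_def \<alpha>_def power2_eq_square)
        have "\<alpha>^2 / real (n - b + 1) < \<alpha>^2 / (1 + \<alpha>)"
          using N \<alpha>0 \<alpha>1 by (intro divide_strict_left_mono) auto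
        then show "A (b - 1) * cc n b < A b" using e1 e2 by (simp add: \<alpha>_def)
      qed
      also have "\<dots> = obj a b (xbar n l)" using obj_high[of a b l n] a 2 l by simp
      finally show ?thesis .
    qed
    moreover have "b \<le> n" using b by simp
    ultimately show False using cmp[of b] a b by simp
  next
    case 3
    then have "real l > 2 + log 2 (log 2 (real n) + log 2 (exp 1))" using H by auto
    from log_bound[OF n this] have s: "real (sylv l) > exp 1 * real n" by simp
    have "obj a b (xbar n (Suc l)) < obj a b (xbar n l)"
      by (rule b_step) (use 3 l a b s in auto)
    moreover have "Suc l \<le> n" using 3 b by simp
    ultimately show False using cmp[of "Suc l"] 3 b by simp
  qed
qed

lemma xbar_n_formula: "xbar n n = (\<lambda>i. if 1 \<le> i \<and> i < n then 1 / real (sylv i)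
                         else if i = n then 1 / (real (sylv n) - 1) else 0)"
  by (rule ext) (auto simp: xbar_def)

lemma partC: assumes n: "n \<ge> 1"
  shows "is_minimizer n 1 n (xbar n n) \<and> (\<forall>y. is_minimizer n 1 n y \<longrightarrow> y = xbar n n)"
proof
  show mn: "is_minimizer n 1 n (xbar n n)"
    unfolding is_minimizer_def
  proof (intro conjI ballI)
    show "xbar n n \<in> Xset n" using xbar_mem[of n n] n by simp
    fix y assume y: "y \<in> Xset n"
    show "obj 1 n (xbar n n) \<le> obj 1 n y" unfolding obj_def using conjunct1[OF D_lemma[OF y _ n]] by simp
  qed
  show "\<forall>y. is_minimizer n 1 n y \<longrightarrow> y = xbar n n"
  proof (intro allI impI)
    fix y assume my: "is_minimizer n 1 n y"
    have y: "y \<in> Xset n" using my unfolding is_minimizer_def by simp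
    have le1: "obj 1 n y \<le> obj 1 n (xbar n n)" using minimizer_le[OF my xbar_mem[of n n]] n by simp
    have D: "(\<Prod>i=1..n. xbar n n i) \<le> (\<Prod>i=1..n. y i) \<and>
         ((\<Prod>i=1..n. y i) = (\<Prod>i=1..n. xbar n n i) \<longrightarrow> (\<forall>i\<in>{1..n}. y i = xbar n n i))"
      using D_lemma[OF y _ n] by simp
    then have eq: "\<forall>i\<in>{1..n}. y i = xbar n n i" using le1 unfolding obj_def by simp
    show "y = xbar n n"
    proof (rule ext)
      fix i show "y i = xbar n n i"
      proof (cases "i \<in> {1..n}")
        case True then show ?thesis using eq by simp
      next
        case False then show ?thesis using X_zero[OF y, of i] xbar_out[of n n i] n by auto
      qed
    qed
  qed
qed



lemma A_Suc0: "A (Suc 0) = 1/2" using A_1 by simp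

lemma pow_helper: fixes x X m :: real assumes "X > 0" "m > 0"
  shows "(x / X) * (x / m) ^ k = x ^ Suc k / (m ^ k * X)"
  using assms by (simp add: power_divide field_simps)

lemma partD: assumes n: "n \<ge> 4" and a: "1 \<le> a" "a \<le> n" and l: "1 \<le> l" "l \<le> n"
  shows "is_minimizer n a n (xbar n l) \<longleftrightarrow> l = n"
proof
  assume "l = n"
  then show "is_minimizer n a n (xbar n l)"
    unfolding is_minimizer_def
  proof (intro conjI ballI)
    show "xbar n l \<in> Xset n" using xbar_mem l by simp
    fix y assume y: "y \<in> Xset n"
    show "obj a n (xbar n l) \<le> obj a n y" unfolding obj_def \<open>l = n\<close>
      using conjunct1[OF D_lemma[OF y a]] .
  qed
next
  assume mn: "is_minimizer n a n (xbar n l)"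
  show "l = n"
  proof (rule ccontr)
    assume ln: "l \<noteq> n"
    have base: "obj a n (xbar n n) = A (n - 1)^2 / A (a - 1)"
      unfolding obj_def using xbarN_prod a by simp
    have Dl: "obj a n (xbar n n) \<le> obj a n y" if "y \<in> Xset n" for y
      unfolding obj_def using conjunct1[OF D_lemma[OF that a]] .
    have gt: "obj a n (xbar n n) < obj a n (xbar n l)"
    proof (cases "l < a")
      case True
      have "obj a n (xbar n n) \<le> obj a n (xbar n a)" using Dl xbar_mem a by simp
      also have "obj a n (xbar n a) = cc n a ^ (Suc n - a)" using obj_low[of a a n n] a by simp
      also have "\<dots> < cc n l ^ (Suc n - a)"
        using cc_strict[of l a n] True l a n cc_pos[of n a] by (intro power_strict_mono) auto
      also have "\<dots> = obj a n (xbar n l)" using obj_low[of l a n n] True l a by simp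
      finally show ?thesis .
    next
      case False
      define j where "j = l - 1"
      define m where "m = Suc n - l"
      have m2: "m \<ge> 2" using ln l unfolding m_def by simp
      have cc: "cc n l = A j / real m" unfolding cc_def j_def m_def using l by (simp add: Suc_diff_le)
      have "obj a n (xbar n l) = (A j / A (a - 1)) * (A j / real m) ^ m"
        using obj_mid[of a l n n] False l a cc unfolding j_def m_def by simp
      also have "\<dots> = A j ^ Suc m / (real m ^ m * A (a - 1))"
        by (rule pow_helper) (use A_pos m2 in auto)
      finally have o: "obj a n (xbar n l) = A j ^ (m + 1) / (real m ^ m * A (a - 1))" by simp
      have ps: "A (j + m - 1)^2 < A j ^ (m + 1) / real m ^ m"
        by (rule Psi) (use m2 n l in \<open>auto simp: j_def m_def\<close>)
      have jm: "j + m - 1 = n - 1" unfolding j_def m_def using l by simp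
      have "A (n - 1)^2 / A (a - 1) < (A j ^ (m + 1) / real m ^ m) / A (a - 1)"
        using ps jm A_pos[of "a-1"] by (intro divide_strict_right_mono) auto
      then show ?thesis using base o by (simp add: field_simps)
    qed
    moreover have "obj a n (xbar n l) \<le> obj a n (xbar n n)" using minimizer_le[OF mn xbar_mem[of n n]] n by simp
    ultimately show False by simp
  qed
qed

lemma partE: assumes n: "n \<ge> 4" and a: "1 \<le> a" "a \<le> n - 1" and l: "1 \<le> l" "l \<le> n"
  shows "is_minimizer n a (n - 1) (xbar n l) \<longleftrightarrow> (l = n - 1 \<or> (n = 4 \<and> a \<in> {1, 2} \<and> l = 2))"
proof -
  define V where "V = A (n-2)^2 / (2 * A (a - 1))"
  have Apa: "A (a - 1) > 0" by (rule A_pos)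
  have Ebd: "V \<le> obj a (n - 1) y" if "y \<in> Xset n" for y
    unfolding V_def obj_def using E_bound[OF that n a] .
  have objV: "obj a (n - 1) (xbar n (n - 1)) = V"
  proof -
    have "obj a (n - 1) (xbar n (n - 1)) = (A (n - 1 - 1) / A (a - 1)) * cc n (n - 1) ^ (Suc (n - 1) - (n - 1))"
      by (rule obj_mid) (use a n in auto)
    also have "cc n (n - 1) = A (n - 2) / 2" unfolding cc_def using n by (simp add: numeral_2_eq_2)
    also have "Suc (n - 1) - (n - 1) = 1" using n by simp
    also have "n - 1 - 1 = n - 2" by simp
    finally show ?thesis unfolding V_def by (simp add: power2_eq_square field_simps)
  qed
  have objS: "obj a (n - 1) (xbar n l) = V" if sp: "n = 4" "a \<in> {1, 2}" "l = 2"
  proof -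
    have a2: "a \<le> 2" using sp by auto
    have "obj a 3 (xbar 4 2) = (A (2 - 1) / A (a - 1)) * cc 4 2 ^ (Suc 3 - 2)"
      by (rule obj_mid) (use a2 a in auto)
    also have "cc 4 2 = 1/6" unfolding cc_def by (simp add: A_1 A_Suc0)
    finally have "obj a 3 (xbar 4 2) = (1/72) / A (a - 1)" by (simp add: A_1 A_Suc0 power2_eq_square)
    moreover have "V = (1/72) / A (a - 1)" unfolding V_def using sp by (simp add: A_2 power2_eq_square)
    ultimately show ?thesis using sp by simp
  qed
  show ?thesis
  proof
    assume mn: "is_minimizer n a (n - 1) (xbar n l)"
    show "l = n - 1 \<or> (n = 4 \<and> a \<in> {1, 2} \<and> l = 2)"
    proof (rule ccontr)
      assume H: "\<not> ?thesis"
      have le: "obj a (n - 1) (xbar n l) \<le> V"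
        using minimizer_le[OF mn xbar_mem[of "n-1" n]] n objV by simp
      have gt: "V < obj a (n - 1) (xbar n l)"
      proof -
        consider "l < a" | "l = n" | "a \<le> l" "l \<le> n - 2" using H l by linarith
        then show ?thesis
        proof cases
          case 1
          have "V \<le> obj a (n - 1) (xbar n a)" using Ebd xbar_mem a n by simp
          also have "obj a (n - 1) (xbar n a) = cc n a ^ (Suc (n - 1) - a)" using obj_low[of a a "n-1" n] a by simp
          also have "\<dots> < cc n l ^ (Suc (n - 1) - a)"
            using cc_strict[of l a n] 1 l a n cc_pos[of n a] by (intro power_strict_mono) auto
          also have "\<dots> = obj a (n - 1) (xbar n l)" using obj_low[of l a "n-1" n] 1 l a by simp
          finally show ?thesis .
        next
          case 2
          have o: "obj a (n - 1) (xbar n l) = A (n - 1) / A (a - 1)" using obj_high[of a "n-1" l n] a 2 n by simp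
          define \<alpha> where "\<alpha> = A (n - 2)"
          have \<alpha>0: "\<alpha> > 0" and \<alpha>h: "\<alpha> \<le> 1/2" using A_pos A_le_half[of "n-2"] n by (auto simp: \<alpha>_def)
          have e: "A (n - 1) = \<alpha>^2 / (1 + \<alpha>)" using A_Suc[of "n-2"] n by (simp add: \<alpha>_def Suc_diff_Suc numeral_2_eq_2)
          have "\<alpha>^2 / 2 < \<alpha>^2 / (1 + \<alpha>)" using \<alpha>0 \<alpha>h by (intro divide_strict_left_mono) auto
          then have "\<alpha>^2 / 2 / A (a - 1) < A (n - 1) / A (a - 1)" using e Apa by (intro divide_strict_right_mono) auto
          then show ?thesis unfolding o V_def \<alpha>_def by (simp add: field_simps)
        next
          case 3
          define j where "j = l - 1"
          define m where "m = Suc n - l"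
          have m3: "m \<ge> 3" using 3 n unfolding m_def by simp
          have cc: "cc n l = A j / real m" unfolding cc_def j_def m_def using l by (simp add: Suc_diff_le)
          have "obj a (n - 1) (xbar n l) = (A j / A (a - 1)) * (A j / real m) ^ (m - 1)"
            using obj_mid[of a l "n-1" n] 3 l a n cc unfolding j_def m_def by simp
          also have "\<dots> = A j ^ Suc (m - 1) / (real m ^ (m - 1) * A (a - 1))"
            by (rule pow_helper) (use A_pos m3 in auto)
          finally have o: "obj a (n - 1) (xbar n l) = A j ^ m / (real m ^ (m - 1) * A (a - 1))"
            using m3 by simp
          have jm: "j + m - 2 = n - 2" unfolding j_def m_def using l 3 by simp
          have st: "A (n - 2)^2 < 2 * A j ^ m / real m ^ (m - 1)"
          proof (cases "m \<ge> 4")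
            case True then show ?thesis using strictE[of m j] jm by simp
          next
            case False
            then have m3': "m = 3" using m3 by simp
            have "n \<noteq> 4"
            proof
              assume "n = 4"
              then have "l = 2" using m3' l unfolding m_def by simp
              moreover have "a \<in> {1, 2}" using 3 a \<open>l = 2\<close> by auto
              ultimately show False using H \<open>n = 4\<close> by simp
            qed
            then have "j \<ge> 2" using m3' n l unfolding j_def m_def by simp
            then have "A (j + 3 - 2)^2 < 2 * A j ^ 3 / 9" by (rule strict3)
            then show ?thesis using jm m3' by simp
          qed
          have "A (n - 2)^2 / (2 * A (a - 1)) < (2 * A j ^ m / real m ^ (m - 1)) / (2 * A (a - 1))"
            using st Apa by (intro divide_strict_right_mono) auto
          then show ?thesis unfolding o V_def by (simp add: field_simps)
        qed
      qed
      show False using le gt by simp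
    qed
  next
    assume c: "l = n - 1 \<or> (n = 4 \<and> a \<in> {1, 2} \<and> l = 2)"
    have ov: "obj a (n - 1) (xbar n l) = V" using c objV objS by blast
    show "is_minimizer n a (n - 1) (xbar n l)"
      unfolding is_minimizer_def using xbar_mem[OF l] Ebd ov by simp
  qed
qed


theorem mainTheorem13:
  fixes n a b l :: nat
  assumes "n \<ge> 4" and "1 \<le> a" and "a \<le> b" and "b \<le> n"
    and "1 \<le> l" and "l \<le> n"
  shows "(a = b \<longrightarrow> is_minimizer n a b (xbar n b))
    \<and> (b < n - 1 \<and> is_minimizer n a b (xbar n l) \<longrightarrow>
         (a \<le> l \<and> real l \<le> 2 + log 2 (log 2 (real n) + log 2 (exp 1))) \<or> l = b)
    \<and> (a = 1 \<and> b = n \<longrightarrow>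
         xbar n n = (\<lambda>i. if 1 \<le> i \<and> i < n then 1 / real (sylv i)
                         else if i = n then 1 / (real (sylv n) - 1) else 0)
         \<and> is_minimizer n a b (xbar n n)
         \<and> (\<forall>y. is_minimizer n a b y \<longrightarrow> y = xbar n n))
    \<and> (b = n \<longrightarrow> (is_minimizer n a b (xbar n l) \<longleftrightarrow> l = n))
    \<and> (b = n - 1 \<longrightarrow> (is_minimizer n a b (xbar n l) \<longleftrightarrow>
         l = n - 1 \<or> (n = 4 \<and> a \<in> {1, 2} \<and> l = 2)))"
proof -
  have pA: "a = b \<longrightarrow> is_minimizer n a b (xbar n b)"
    using partA[of b n] assms by auto
  have pB: "b < n - 1 \<and> is_minimizer n a b (xbar n l) \<longrightarrow>
         (a \<le> l \<and> real l \<le> 2 + log 2 (log 2 (real n) + log 2 (exp 1))) \<or> l = b"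
    using partB[of n a b l] assms by blast
  have pC: "a = 1 \<and> b = n \<longrightarrow>
         xbar n n = (\<lambda>i. if 1 \<le> i \<and> i < n then 1 / real (sylv i)
                         else if i = n then 1 / (real (sylv n) - 1) else 0)
         \<and> is_minimizer n a b (xbar n n)
         \<and> (\<forall>y. is_minimizer n a b y \<longrightarrow> y = xbar n n)"
    using xbar_n_formula[of n] partC[of n] assms by auto
  have pD: "b = n \<longrightarrow> (is_minimizer n a b (xbar n l) \<longleftrightarrow> l = n)"
    using partD[of n a l] assms by auto
  have pE: "b = n - 1 \<longrightarrow> (is_minimizer n a b (xbar n l) \<longleftrightarrow>
         l = n - 1 \<or> (n = 4 \<and> a \<in> {1, 2} \<and> l = 2))"
    using partE[of n a l] assms by auto
  show ?thesis using pA pB pC pD pE by blast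
qed

end
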